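(* Let $G$ be a two-player stage game and consider the mixed-pure regime. There exist a positive integer $T$ and an SPE of $G(T)$ in which locally suboptimal behavior occurs if and only if at least one of the following holds: (1) $|V_1^{m,p}|>1$, $|V_2^{m,p}|>1$, and there exist $\hat\sigma_1\in\Delta A_1,\hat a_2\in A_2$ with $(\hat\sigma_1,\hat a_2)\notin\mathrm{Nash}^{m,p}(G)$; (2) $|V_1^{m,p}|>1$, $|V_2^{m,p}|=1$, and there exist $\hat\sigma_1\in\Delta A_1$, $a_1'\in A_1$, $\hat a_2\in A_2$ such that (a) $u_1(\hat\sigma_1,\hat a_2)<u_1(a_1',\hat a_2)$, (b) $\hat a_2$ is a best response to $\hat\sigma_1$, and (c) if $|S_{\hat\sigma_1}|>1$, then, with $D=\{u_1(\sigma)-u_1(\sigma'):\sigma,\sigma'\in\mathrm{Nash}^{m,p}(G)\}$, there is $a\in S_{\hat\sigma_1}$ such that for every $a'\in S_{\hat\sigma_1}\setminus\{a\}$ there exist an integer $n_{a'}\ge0$ and $d_1^{a'},\dots,d_{n_{a'}}^{a'}\in D$ with $u_1(a,\hat a_2)-u_1(a',\hat a_2)=\sum_{k=1}^{n_{a'}}d_k^{a'}$; (3) $|V_1^{m,p}|=1$, $|V_2^{m,p}|>1$, and there exist $\hat\sigma_1\in\Delta A_1$, $\hat a_2,a_2'\in A_2$ with $u_2(\hat\sigma_1,\hat a_2)<u_2(\hat\sigma_1,a_2')$ and $\hat\sigma_1$ a best response to $\hat a_2$.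
   Context: A two-player stage game $G$ consists of finite nonempty action sets $A_1,A_2$ and payoff functions $u_1,u_2:A_1\times A_2\to\mathbb{R}$, extended to mixed strategies by expectation; $S_{\sigma_1}=\{a\in A_1:\sigma_1(a)>0\}$ is the support. In the mixed-pure regime, player 1 may use mixed strategies while player 2 is restricted to actions, both in the stage game and in every round of the repeated game (including deviations). $G(T)$ is the $T$-round repetition of $G$ with realized actions observed after each round and payoffs equal to the expected sum of stage payoffs; player 1's strategy maps histories $\bigcup_{k=0}^{T-1}(A_1\times A_2)^k$ to $\Delta A_1$ and player 2's maps histories to $A_2$. A profile is an SPE if its continuation after every history of length $k<T$ is a Nash equilibrium of $G(T-k)$ in this regime. $\mathrm{Nash}^{m,p}(G)$ is the set of $(\sigma_1,a_2)\in\Delta A_1\times A_2$ with $\sigma_1$ a best response to $a_2$ and $a_2$ a best response among actions to $\sigma_1$; $V_i^{m,p}=\{u_i(\sigma):\sigma\in\mathrm{Nash}^{m,p}(G)\}$. Locally suboptimal behavior occurs in an SPE $\mu$ of $G(T)$ if for some history $h$ of length $k<T$, $(\mu_1(h),\mu_2(h))\notin\mathrm{Nash}^{m,p}(G)$. *)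

theory Defs
  imports Complex_Main
begin

definition mixed :: "'a set \<Rightarrow> ('a \<Rightarrow> real) set" where
  "mixed A = {\<sigma>. (\<forall>a\<in>A. 0 \<le> \<sigma> a) \<and> (\<forall>a. a \<notin> A \<longrightarrow> \<sigma> a = 0) \<and> sum \<sigma> A = 1}"

definition support :: "'a set \<Rightarrow> ('a \<Rightarrow> real) \<Rightarrow> 'a set" where
  "support A \<sigma> = {a\<in>A. 0 < \<sigma> a}"

definition eu :: "'a set \<Rightarrow> ('a \<Rightarrow> 'b \<Rightarrow> real) \<Rightarrow> ('a \<Rightarrow> real) \<Rightarrow> 'b \<Rightarrow> real" where
  "eu A u \<sigma> b = (\<Sum>a\<in>A. \<sigma> a * u a b)"

definition br1 :: "'a set \<Rightarrow> ('a \<Rightarrow> 'b \<Rightarrow> real) \<Rightarrow> ('a \<Rightarrow> real) \<Rightarrow> 'b \<Rightarrow> bool" where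
  "br1 A1 u1 \<sigma> b \<longleftrightarrow> \<sigma> \<in> mixed A1 \<and> (\<forall>\<sigma>'\<in>mixed A1. eu A1 u1 \<sigma>' b \<le> eu A1 u1 \<sigma> b)"

definition br2 :: "'a set \<Rightarrow> 'b set \<Rightarrow> ('a \<Rightarrow> 'b \<Rightarrow> real) \<Rightarrow> ('a \<Rightarrow> real) \<Rightarrow> 'b \<Rightarrow> bool" where
  "br2 A1 A2 u2 \<sigma> b \<longleftrightarrow> b \<in> A2 \<and> (\<forall>b'\<in>A2. eu A1 u2 \<sigma> b' \<le> eu A1 u2 \<sigma> b)"

definition NashMP :: "'a set \<Rightarrow> 'b set \<Rightarrow> ('a \<Rightarrow> 'b \<Rightarrow> real) \<Rightarrow> ('a \<Rightarrow> 'b \<Rightarrow> real)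
    \<Rightarrow> (('a \<Rightarrow> real) \<times> 'b) set" where
  "NashMP A1 A2 u1 u2 = {(\<sigma>, b). \<sigma> \<in> mixed A1 \<and> b \<in> A2 \<and> br1 A1 u1 \<sigma> b \<and> br2 A1 A2 u2 \<sigma> b}"

text \<open>Equilibrium payoff set V_i^{m,p} for a payoff function u (u1 or u2).\<close>
definition Vset :: "'a set \<Rightarrow> 'b set \<Rightarrow> ('a \<Rightarrow> 'b \<Rightarrow> real) \<Rightarrow> ('a \<Rightarrow> 'b \<Rightarrow> real)
    \<Rightarrow> ('a \<Rightarrow> 'b \<Rightarrow> real) \<Rightarrow> real set" where
  "Vset A1 A2 u1 u2 u = {eu A1 u \<sigma> b | \<sigma> b. (\<sigma>, b) \<in> NashMP A1 A2 u1 u2}"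

text \<open>Histories are lists of realized action pairs, oldest first.\<close>
definition hist :: "'a set \<Rightarrow> 'b set \<Rightarrow> ('a \<times> 'b) list \<Rightarrow> bool" where
  "hist A1 A2 h \<longleftrightarrow> set h \<subseteq> A1 \<times> A2"

definition strat1 :: "'a set \<Rightarrow> 'b set \<Rightarrow> nat \<Rightarrow> (('a \<times> 'b) list \<Rightarrow> 'a \<Rightarrow> real) \<Rightarrow> bool" where
  "strat1 A1 A2 T s \<longleftrightarrow> (\<forall>h. hist A1 A2 h \<and> length h < T \<longrightarrow> s h \<in> mixed A1)"

definition strat2 :: "'a set \<Rightarrow> 'b set \<Rightarrow> nat \<Rightarrow> (('a \<times> 'b) list \<Rightarrow> 'b) \<Rightarrow> bool" where
  "strat2 A1 A2 T s \<longleftrightarrow> (\<forall>h. hist A1 A2 h \<and> length h < T \<longrightarrow> s h \<in> A2)"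

fun rpay :: "'a set \<Rightarrow> ('a \<Rightarrow> 'b \<Rightarrow> real) \<Rightarrow> nat \<Rightarrow> (('a \<times> 'b) list \<Rightarrow> 'a \<Rightarrow> real)
    \<Rightarrow> (('a \<times> 'b) list \<Rightarrow> 'b) \<Rightarrow> ('a \<times> 'b) list \<Rightarrow> real" where
  "rpay A u 0 s1 s2 h = 0"
| "rpay A u (Suc n) s1 s2 h =
     (\<Sum>a\<in>A. s1 h a * (u a (s2 h) + rpay A u n s1 s2 (h @ [(a, s2 h)])))"

definition payoff :: "'a set \<Rightarrow> ('a \<Rightarrow> 'b \<Rightarrow> real) \<Rightarrow> nat \<Rightarrow> (('a \<times> 'b) list \<Rightarrow> 'a \<Rightarrow> real)
    \<Rightarrow> (('a \<times> 'b) list \<Rightarrow> 'b) \<Rightarrow> real" where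
  "payoff A u T s1 s2 = rpay A u T s1 s2 []"

text \<open>Nash equilibrium of G(T) in the mixed-pure regime: player 1 deviates to
  any (behavioural mixed) strategy, player 2 only to pure strategies.\<close>
definition NashRep :: "'a set \<Rightarrow> 'b set \<Rightarrow> ('a \<Rightarrow> 'b \<Rightarrow> real) \<Rightarrow> ('a \<Rightarrow> 'b \<Rightarrow> real) \<Rightarrow> nat
    \<Rightarrow> (('a \<times> 'b) list \<Rightarrow> 'a \<Rightarrow> real) \<Rightarrow> (('a \<times> 'b) list \<Rightarrow> 'b) \<Rightarrow> bool" where
  "NashRep A1 A2 u1 u2 T s1 s2 \<longleftrightarrow>
     strat1 A1 A2 T s1 \<and> strat2 A1 A2 T s2 \<and>
     (\<forall>s1'. strat1 A1 A2 T s1' \<longrightarrow> payoff A1 u1 T s1' s2 \<le> payoff A1 u1 T s1 s2) \<and>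
     (\<forall>s2'. strat2 A1 A2 T s2' \<longrightarrow> payoff A1 u2 T s1 s2' \<le> payoff A1 u2 T s1 s2)"

definition cont :: "(('a \<times> 'b) list \<Rightarrow> 'c) \<Rightarrow> ('a \<times> 'b) list \<Rightarrow> (('a \<times> 'b) list \<Rightarrow> 'c)" where
  "cont s h = (\<lambda>h'. s (h @ h'))"

definition SPE :: "'a set \<Rightarrow> 'b set \<Rightarrow> ('a \<Rightarrow> 'b \<Rightarrow> real) \<Rightarrow> ('a \<Rightarrow> 'b \<Rightarrow> real) \<Rightarrow> nat
    \<Rightarrow> (('a \<times> 'b) list \<Rightarrow> 'a \<Rightarrow> real) \<Rightarrow> (('a \<times> 'b) list \<Rightarrow> 'b) \<Rightarrow> bool" where
  "SPE A1 A2 u1 u2 T s1 s2 \<longleftrightarrow>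
     strat1 A1 A2 T s1 \<and> strat2 A1 A2 T s2 \<and>
     (\<forall>h. hist A1 A2 h \<and> length h < T \<longrightarrow>
        NashRep A1 A2 u1 u2 (T - length h) (cont s1 h) (cont s2 h))"

definition locally_suboptimal :: "'a set \<Rightarrow> 'b set \<Rightarrow> ('a \<Rightarrow> 'b \<Rightarrow> real) \<Rightarrow> ('a \<Rightarrow> 'b \<Rightarrow> real)
    \<Rightarrow> nat \<Rightarrow> (('a \<times> 'b) list \<Rightarrow> 'a \<Rightarrow> real) \<Rightarrow> (('a \<times> 'b) list \<Rightarrow> 'b) \<Rightarrow> bool" where
  "locally_suboptimal A1 A2 u1 u2 T s1 s2 \<longleftrightarrow>
     (\<exists>h. hist A1 A2 h \<and> length h < T \<and> (s1 h, s2 h) \<notin> NashMP A1 A2 u1 u2)"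

end

theory Submission
  imports Defs
begin

definition ind :: "'a \<Rightarrow> 'a \<Rightarrow> real" where
  "ind a = (\<lambda>x. if x = a then 1 else 0)"

lemma ind_mixed: "finite A \<Longrightarrow> a \<in> A \<Longrightarrow> ind a \<in> mixed A"
  by (auto simp: mixed_def ind_def)

lemma sum_ind: "finite A \<Longrightarrow> a \<in> A \<Longrightarrow> (\<Sum>x\<in>A. ind a x * f x) = f a"
proof -
  assume "finite A" "a \<in> A"
  have "(\<Sum>x\<in>A. ind a x * f x) = (\<Sum>x\<in>A. if x = a then f x else 0)"
    by (rule sum.cong) (auto simp: ind_def)
  also have "\<dots> = f a" using \<open>finite A\<close> \<open>a \<in> A\<close> by (simp add: sum.delta')
  finally show ?thesis .
qed

lemma mixedD: assumes "\<sigma> \<in> mixed A" shows "\<And>a. a \<in> A \<Longrightarrow> 0 \<le> \<sigma> a" "sum \<sigma> A = 1"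
  "\<And>a. a \<notin> A \<Longrightarrow> \<sigma> a = 0"
  using assms by (auto simp: mixed_def)

lemma sum_mixed_const: assumes "\<sigma> \<in> mixed A" shows "(\<Sum>x\<in>A. \<sigma> x * (f x + c)) = (\<Sum>x\<in>A. \<sigma> x * f x) + c"
proof -
  have "(\<Sum>x\<in>A. \<sigma> x * (f x + c)) = (\<Sum>x\<in>A. \<sigma> x * f x) + (\<Sum>x\<in>A. \<sigma> x * c)"
    by (simp add: distrib_left sum.distrib)
  also have "(\<Sum>x\<in>A. \<sigma> x * c) = sum \<sigma> A * c" by (simp add: sum_distrib_right)
  finally show ?thesis using mixedD(2)[OF assms] by simp
qed

lemma mixed_supp_ex: assumes "\<sigma> \<in> mixed A" "finite A" shows "\<exists>a\<in>A. 0 < \<sigma> a"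
proof (rule ccontr)
  assume "\<not> ?thesis"
  then have "\<forall>a\<in>A. \<sigma> a = 0"
  proof (intro ballI)
    fix a assume "a \<in> A" "\<not> (\<exists>a\<in>A. 0 < \<sigma> a)"
    then have "0 \<le> \<sigma> a" "\<not> 0 < \<sigma> a" using mixedD(1)[OF assms(1)] by auto
    then show "\<sigma> a = 0" by linarith
  qed
  then have "sum \<sigma> A = 0" by simp
  with mixedD(2)[OF assms(1)] show False by simp
qed

lemma supp_eq:
  fixes \<sigma> X :: "'a \<Rightarrow> real" and R :: real
  assumes "finite A" "\<forall>a\<in>A. 0 \<le> \<sigma> a" "sum \<sigma> A = 1" "\<forall>a\<in>A. X a \<le> R"
    "(\<Sum>a\<in>A. \<sigma> a * X a) = R" "a \<in> A" "0 < \<sigma> a"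
  shows "X a = R"
proof -
  have "(\<Sum>a\<in>A. \<sigma> a * (R - X a)) = (\<Sum>a\<in>A. \<sigma> a * R) - (\<Sum>a\<in>A. \<sigma> a * X a)"
    by (simp add: right_diff_distrib sum_subtractf)
  also have "(\<Sum>a\<in>A. \<sigma> a * R) = (\<Sum>a\<in>A. \<sigma> a) * R" by (simp add: sum_distrib_right)
  finally have "(\<Sum>a\<in>A. \<sigma> a * (R - X a)) = 0" using assms(3,5) by simp
  moreover have nn: "\<forall>a\<in>A. 0 \<le> \<sigma> a * (R - X a)"
  proof
    fix a assume "a \<in> A"
    then have "0 \<le> \<sigma> a" "0 \<le> R - X a" using assms(2,4) by auto
    then show "0 \<le> \<sigma> a * (R - X a)" by (rule mult_nonneg_nonneg)
  qed
  ultimately have "\<forall>x\<in>A. \<sigma> x * (R - X x) = 0" using sum_nonneg_eq_0_iff[OF assms(1), of "\<lambda>x. \<sigma> x * (R - X x)"] by blast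
  then have "\<sigma> a * (R - X a) = 0" using assms(6) by blast
  with assms(7) show ?thesis by simp
qed

lemma eu_ind: "finite A \<Longrightarrow> a \<in> A \<Longrightarrow> eu A u (ind a) b = u a b"
  by (simp add: eu_def sum_ind)

lemma br1_pure: "br1 A1 u1 \<sigma> b \<Longrightarrow> a \<in> A1 \<Longrightarrow> finite A1 \<Longrightarrow> u1 a b \<le> eu A1 u1 \<sigma> b"
  by (metis br1_def eu_ind ind_mixed)

lemma br1_of_pure: assumes "finite A1" "\<sigma> \<in> mixed A1" "\<forall>a\<in>A1. u1 a b \<le> eu A1 u1 \<sigma> b"
  shows "br1 A1 u1 \<sigma> b"
  unfolding br1_def
proof (intro conjI ballI)
  fix \<sigma>' assume s: "\<sigma>' \<in> mixed A1"
  have "eu A1 u1 \<sigma>' b = (\<Sum>a\<in>A1. \<sigma>' a * u1 a b)" by (simp add: eu_def)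
  also have "\<dots> \<le> (\<Sum>a\<in>A1. \<sigma>' a * eu A1 u1 \<sigma> b)"
    by (rule sum_mono) (simp add: assms(3) mixedD(1)[OF s] mult_left_mono)
  also have "\<dots> = sum \<sigma>' A1 * eu A1 u1 \<sigma> b" by (simp add: sum_distrib_right)
  also have "\<dots> = eu A1 u1 \<sigma> b" by (simp add: mixedD(2)[OF s])
  finally show "eu A1 u1 \<sigma>' b \<le> eu A1 u1 \<sigma> b" .
qed (rule assms(2))

lemma br1_supp: assumes "br1 A1 u1 \<sigma> b" "a \<in> A1" "0 < \<sigma> a" "finite A1"
  shows "u1 a b = eu A1 u1 \<sigma> b"
proof -
  have m: "\<sigma> \<in> mixed A1" using assms(1) by (simp add: br1_def)
  have X: "\<forall>a\<in>A1. u1 a b \<le> eu A1 u1 \<sigma> b" using br1_pure[OF assms(1) _ assms(4)] by blast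
  have S: "(\<Sum>a\<in>A1. \<sigma> a * u1 a b) = eu A1 u1 \<sigma> b" by (simp add: eu_def)
  show ?thesis
    by (rule supp_eq[where X="\<lambda>a. u1 a b" and \<sigma>=\<sigma> and A=A1, OF assms(4) _ mixedD(2)[OF m] X S assms(2,3)])
       (simp add: mixedD(1)[OF m])
qed

lemma rpay_cont: "rpay A u n (cont s1 g) (cont s2 g) g' = rpay A u n s1 s2 (g @ g')"
  by (induction n arbitrary: g') (simp_all add: cont_def)

lemma rpay_cong:
  "(\<And>g'. t1 (g @ g') = t1' (g @ g')) \<Longrightarrow> (\<And>g'. t2 (g @ g') = t2' (g @ g'))
   \<Longrightarrow> rpay A u n t1 t2 g = rpay A u n t1' t2' g"
proof (induction n arbitrary: g)
  case 0 then show ?case by simp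
next
  case (Suc n)
  have e1: "t1 g = t1' g" and e2: "t2 g = t2' g" using Suc.prems[of "[]"] by auto
  have "\<And>x. rpay A u n t1 t2 (g @ [x]) = rpay A u n t1' t2' (g @ [x])"
    by (rule Suc.IH) (metis Suc.prems append_assoc)+
  then show ?case by (simp add: e1 e2)
qed

lemma hist_app: "hist A1 A2 g \<Longrightarrow> a \<in> A1 \<Longrightarrow> b \<in> A2 \<Longrightarrow> hist A1 A2 (g @ [(a, b)])"
  by (simp add: hist_def)

lemma osd_nec1:
  assumes "NashRep A1 A2 u1 u2 (Suc m) t1 t2" "a \<in> A1" "finite A1"
  shows "u1 a (t2 []) + rpay A1 u1 m t1 t2 [(a, t2 [])] \<le> rpay A1 u1 (Suc m) t1 t2 []"
proof -
  define t1' where "t1' = t1([] := ind a)"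
  have st: "strat1 A1 A2 (Suc m) t1'"
    using assms unfolding strat1_def NashRep_def t1'_def by (auto simp: ind_mixed)
  then have "payoff A1 u1 (Suc m) t1' t2 \<le> payoff A1 u1 (Suc m) t1 t2"
    using assms(1) by (simp add: NashRep_def)
  moreover have "rpay A1 u1 m t1' t2 [(a, t2 [])] = rpay A1 u1 m t1 t2 [(a, t2 [])]"
    by (rule rpay_cong) (auto simp: t1'_def)
  moreover have "payoff A1 u1 (Suc m) t1' t2 = (\<Sum>x\<in>A1. ind a x * (u1 x (t2 []) + rpay A1 u1 m t1' t2 [(x, t2 [])]))"
    by (simp add: payoff_def t1'_def)
  ultimately show ?thesis using assms by (simp add: sum_ind payoff_def)
qed

lemma osd_nec2:
  assumes "NashRep A1 A2 u1 u2 (Suc m) t1 t2" "b \<in> A2"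
  shows "(\<Sum>x\<in>A1. t1 [] x * (u2 x b + rpay A1 u2 m t1 t2 [(x, b)])) \<le> rpay A1 u2 (Suc m) t1 t2 []"
proof -
  define t2' where "t2' = t2([] := b)"
  have st: "strat2 A1 A2 (Suc m) t2'"
    using assms unfolding strat2_def NashRep_def t2'_def by auto
  then have "payoff A1 u2 (Suc m) t1 t2' \<le> payoff A1 u2 (Suc m) t1 t2"
    using assms(1) by (simp add: NashRep_def)
  moreover have "\<And>x. rpay A1 u2 m t1 t2' [(x, b)] = rpay A1 u2 m t1 t2 [(x, b)]"
    by (rule rpay_cong) (auto simp: t2'_def)
  ultimately show ?thesis by (simp add: payoff_def t2'_def)
qed

lemma hist_append: "hist A1 A2 (g @ g') \<longleftrightarrow> hist A1 A2 g \<and> hist A1 A2 g'"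
  by (auto simp: hist_def)

lemma osd_suff:
  assumes fin: "finite A1" and s1: "strat1 A1 A2 T s1" and s2: "strat2 A1 A2 T s2"
  and P1: "\<And>g a. hist A1 A2 g \<Longrightarrow> length g < T \<Longrightarrow> a \<in> A1 \<Longrightarrow>
      u1 a (s2 g) + rpay A1 u1 (T - Suc (length g)) s1 s2 (g @ [(a, s2 g)]) \<le> rpay A1 u1 (T - length g) s1 s2 g"
  and P2: "\<And>g b. hist A1 A2 g \<Longrightarrow> length g < T \<Longrightarrow> b \<in> A2 \<Longrightarrow>
      (\<Sum>a\<in>A1. s1 g a * (u2 a b + rpay A1 u2 (T - Suc (length g)) s1 s2 (g @ [(a, b)]))) \<le> rpay A1 u2 (T - length g) s1 s2 g"
  shows "SPE A1 A2 u1 u2 T s1 s2"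
  unfolding SPE_def
proof (intro conjI allI impI)
  show "strat1 A1 A2 T s1" "strat2 A1 A2 T s2" using s1 s2 .
  fix h assume hh: "hist A1 A2 h \<and> length h < T"
  then have hh1: "hist A1 A2 h" and hh2: "length h < T" by auto
  define n where "n = T - length h"
  have st1: "strat1 A1 A2 n (cont s1 h)" unfolding strat1_def
  proof (intro allI impI)
    fix h' assume a: "hist A1 A2 h' \<and> length h' < n"
    then have "length h' < T - length h" unfolding n_def by blast
    then have "length (h @ h') < T" using hh2 by simp
    moreover have "hist A1 A2 (h @ h')" using a hh1 by (simp add: hist_append)
    ultimately have "hist A1 A2 (h @ h') \<and> length (h @ h') < T" by blast
    then show "cont s1 h h' \<in> mixed A1" using s1 unfolding strat1_def cont_def by blast
  qed
  have st2: "strat2 A1 A2 n (cont s2 h)" unfolding strat2_def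
  proof (intro allI impI)
    fix h' assume a: "hist A1 A2 h' \<and> length h' < n"
    then have "length h' < T - length h" unfolding n_def by blast
    then have "length (h @ h') < T" using hh2 by simp
    moreover have "hist A1 A2 (h @ h')" using a hh1 by (simp add: hist_append)
    ultimately have "hist A1 A2 (h @ h') \<and> length (h @ h') < T" by blast
    then show "cont s2 h h' \<in> A2" using s2 unfolding strat2_def cont_def by blast
  qed
  have pay: "\<And>u. payoff A1 u n (cont s1 h) (cont s2 h) = rpay A1 u n s1 s2 h"
    by (simp add: payoff_def rpay_cont)
  have D1: "payoff A1 u1 n s1' (cont s2 h) \<le> payoff A1 u1 n (cont s1 h) (cont s2 h)"
    if sd: "strat1 A1 A2 n s1'" for s1'
  proof -
    have IHm: "\<forall>g'. hist A1 A2 g' \<longrightarrow> length h + length g' + m = T \<longrightarrow>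
          rpay A1 u1 m s1' (cont s2 h) g' \<le> rpay A1 u1 m s1 s2 (h @ g')" for m
    proof (induction m)
      case 0 then show ?case by simp
    next
      case (Suc k)
      show ?case
      proof (intro allI impI)
        fix g' assume hg: "hist A1 A2 g'" and lg: "length h + length g' + Suc k = T"
        define g where "g = h @ g'"
        define b where "b = s2 g"
        have hgg: "hist A1 A2 g" using hg hh1 by (simp add: g_def hist_append)
        have lgg: "length g < T" using lg by (simp add: g_def)
        have bA: "b \<in> A2" using s2 hgg lgg by (simp add: strat2_def b_def)
        have mx: "s1' g' \<in> mixed A1" using sd hg lg by (auto simp: strat1_def n_def)
        have "rpay A1 u1 (Suc k) s1' (cont s2 h) g' =
              (\<Sum>a\<in>A1. s1' g' a * (u1 a b + rpay A1 u1 k s1' (cont s2 h) (g' @ [(a, b)])))"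
          by (simp add: cont_def b_def g_def del: append_assoc)
        also have "\<dots> \<le> (\<Sum>a\<in>A1. s1' g' a * (u1 a b + rpay A1 u1 k s1 s2 (g @ [(a, b)])))"
        proof (rule sum_mono)
          fix a assume aA: "a \<in> A1"
          have "rpay A1 u1 k s1' (cont s2 h) (g' @ [(a, b)]) \<le> rpay A1 u1 k s1 s2 (h @ (g' @ [(a, b)]))"
            using Suc.IH[rule_format, OF hist_app[OF hg aA bA]] lg by simp
          then show "s1' g' a * (u1 a b + rpay A1 u1 k s1' (cont s2 h) (g' @ [(a, b)]))
                \<le> s1' g' a * (u1 a b + rpay A1 u1 k s1 s2 (g @ [(a, b)]))"
            by (intro mult_left_mono) (auto simp: g_def mixedD(1)[OF mx aA])
        qed
        also have "\<dots> \<le> (\<Sum>a\<in>A1. s1' g' a * rpay A1 u1 (Suc k) s1 s2 g)"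
        proof (rule sum_mono)
          fix a assume aA: "a \<in> A1"
          have "T - Suc (length g) = k" "T - length g = Suc k" using lg by (auto simp: g_def)
          then have "u1 a b + rpay A1 u1 k s1 s2 (g @ [(a, b)]) \<le> rpay A1 u1 (Suc k) s1 s2 g"
            using P1[OF hgg lgg aA] by (simp add: b_def)
          then show "s1' g' a * (u1 a b + rpay A1 u1 k s1 s2 (g @ [(a, b)])) \<le> s1' g' a * rpay A1 u1 (Suc k) s1 s2 g"
            by (intro mult_left_mono) (auto simp: mixedD(1)[OF mx aA])
        qed
        also have "\<dots> = sum (s1' g') A1 * rpay A1 u1 (Suc k) s1 s2 g"
          by (simp add: sum_distrib_right)
        also have "\<dots> = rpay A1 u1 (Suc k) s1 s2 (h @ g')"
          by (simp add: mixedD(2)[OF mx] g_def)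
        finally show "rpay A1 u1 (Suc k) s1' (cont s2 h) g' \<le> rpay A1 u1 (Suc k) s1 s2 (h @ g')" .
      qed
    qed
    have "rpay A1 u1 n s1' (cont s2 h) [] \<le> rpay A1 u1 n s1 s2 (h @ [])"
      using IHm[of n, rule_format, of "[]"] hh2 by (simp add: hist_def n_def)
    then show ?thesis unfolding payoff_def rpay_cont .
  qed
  have D2: "payoff A1 u2 n (cont s1 h) s2' \<le> payoff A1 u2 n (cont s1 h) (cont s2 h)"
    if sd: "strat2 A1 A2 n s2'" for s2'
  proof -
    have IHm: "\<forall>g'. hist A1 A2 g' \<longrightarrow> length h + length g' + m = T \<longrightarrow>
          rpay A1 u2 m (cont s1 h) s2' g' \<le> rpay A1 u2 m s1 s2 (h @ g')" for m
    proof (induction m)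
      case 0 then show ?case by simp
    next
      case (Suc k)
      show ?case
      proof (intro allI impI)
        fix g' assume hg: "hist A1 A2 g'" and lg: "length h + length g' + Suc k = T"
        define g where "g = h @ g'"
        define b where "b = s2' g'"
        have hgg: "hist A1 A2 g" using hg hh1 by (simp add: g_def hist_append)
        have lgg: "length g < T" using lg by (simp add: g_def)
        have bA: "b \<in> A2" using sd hg lg by (auto simp: strat2_def b_def n_def)
        have mx: "s1 g \<in> mixed A1" using s1 hgg lgg by (auto simp: strat1_def)
        have "rpay A1 u2 (Suc k) (cont s1 h) s2' g' =
              (\<Sum>a\<in>A1. s1 g a * (u2 a b + rpay A1 u2 k (cont s1 h) s2' (g' @ [(a, b)])))"
          by (simp add: cont_def b_def g_def del: append_assoc)
        also have "\<dots> \<le> (\<Sum>a\<in>A1. s1 g a * (u2 a b + rpay A1 u2 k s1 s2 (g @ [(a, b)])))"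
        proof (rule sum_mono)
          fix a assume aA: "a \<in> A1"
          have "rpay A1 u2 k (cont s1 h) s2' (g' @ [(a, b)]) \<le> rpay A1 u2 k s1 s2 (h @ (g' @ [(a, b)]))"
            using Suc.IH[rule_format, OF hist_app[OF hg aA bA]] lg by simp
          then show "s1 g a * (u2 a b + rpay A1 u2 k (cont s1 h) s2' (g' @ [(a, b)]))
                \<le> s1 g a * (u2 a b + rpay A1 u2 k s1 s2 (g @ [(a, b)]))"
            using mixedD(1)[OF mx aA] by (intro mult_left_mono) (auto simp: g_def)
        qed
        also have "\<dots> \<le> rpay A1 u2 (Suc k) s1 s2 g"
        proof -
          have "T - Suc (length g) = k" "T - length g = Suc k" using lg by (auto simp: g_def)
          then show ?thesis using P2[OF hgg lgg bA] by simp
        qed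
        finally show "rpay A1 u2 (Suc k) (cont s1 h) s2' g' \<le> rpay A1 u2 (Suc k) s1 s2 (h @ g')"
          by (simp add: g_def)
      qed
    qed
    have "rpay A1 u2 n (cont s1 h) s2' [] \<le> rpay A1 u2 n s1 s2 (h @ [])"
      using IHm[of n, rule_format, of "[]"] hh2 by (simp add: hist_def n_def)
    then show ?thesis unfolding payoff_def rpay_cont .
  qed
  show "NashRep A1 A2 u1 u2 (T - length h) (cont s1 h) (cont s2 h)"
    unfolding NashRep_def n_def[symmetric] using st1 st2 D1 D2 by blast
qed

definition cval :: "'a set \<Rightarrow> ('a \<Rightarrow> 'b \<Rightarrow> real) \<Rightarrow> (('a \<Rightarrow> real) \<times> 'b) list \<Rightarrow> real" where
  "cval A u xs = sum_list (map (\<lambda>p. eu A u (fst p) (snd p)) xs)"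

lemma cval_simps[simp]: "cval A u [] = 0" "cval A u (p # xs) = eu A u (fst p) (snd p) + cval A u xs"
  "cval A u (xs @ ys) = cval A u xs + cval A u ys"
  by (simp_all add: cval_def)

lemma cval_replicate[simp]: "cval A u (replicate k p) = real k * eu A u (fst p) (snd p)"
  by (induction k) (simp_all add: algebra_simps)

definition mk1 :: "('a \<Rightarrow> real) \<Rightarrow> (('a \<times> 'b) \<Rightarrow> (('a \<Rightarrow> real) \<times> 'b) list) \<Rightarrow> ('a \<times> 'b) list \<Rightarrow> 'a \<Rightarrow> real" where
  "mk1 \<sigma> L g = (if g = [] then \<sigma> else fst (L (hd g) ! (length g - 1)))"

definition mk2 :: "'b \<Rightarrow> (('a \<times> 'b) \<Rightarrow> (('a \<Rightarrow> real) \<times> 'b) list) \<Rightarrow> ('a \<times> 'b) list \<Rightarrow> 'b" where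
  "mk2 b L g = (if g = [] then b else snd (L (hd g) ! (length g - 1)))"

lemma mk_val:
  assumes len: "\<forall>x. length (L x) = n" and mx: "\<forall>x. \<forall>p\<in>set (L x). fst p \<in> mixed A"
  shows "g \<noteq> [] \<Longrightarrow> length g + m = Suc n \<Longrightarrow>
    rpay A u m (mk1 \<sigma> L) (mk2 b L) g = cval A u (drop (length g - 1) (L (hd g)))"
proof (induction m arbitrary: g)
  case 0
  have "length (L (hd g)) = n" using len by blast
  then show ?case using 0 by simp
next
  case (Suc m)
  define p where "p = L (hd g) ! (length g - 1)"
  have "length (L (hd g)) = n" using len by blast
  then have lt: "length g - 1 < length (L (hd g))" using Suc.prems by (cases g) auto
  have pin: "p \<in> set (L (hd g))" using lt by (simp add: p_def)
  have m1: "mk1 \<sigma> L g = fst p" "mk2 b L g = snd p" using Suc.prems by (simp_all add: mk1_def mk2_def p_def)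
  have IH: "\<And>a. rpay A u m (mk1 \<sigma> L) (mk2 b L) (g @ [(a, snd p)]) = cval A u (drop (length g) (L (hd g)))"
    using Suc.IH[of "g @ [(_, snd p)]"] Suc.prems by (simp add: hd_append)
  have dr: "drop (length g - 1) (L (hd g)) = p # drop (length g) (L (hd g))"
    using Cons_nth_drop_Suc[OF lt] Suc.prems by (simp add: p_def)
  have "rpay A u (Suc m) (mk1 \<sigma> L) (mk2 b L) g
     = (\<Sum>a\<in>A. fst p a * (u a (snd p) + cval A u (drop (length g) (L (hd g)))))"
    by (simp add: m1 IH)
  also have "\<dots> = eu A u (fst p) (snd p) + cval A u (drop (length g) (L (hd g)))"
    using sum_mixed_const[of "fst p" A] mx pin by (simp add: eu_def)
  finally show ?case unfolding dr by simp
qed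

lemma construct:
  fixes A1 :: "'a set" and A2 :: "'b set"
  assumes fin: "finite A1" and sm: "\<sigma> \<in> mixed A1" and b0: "b0 \<in> A2"
    and len: "\<forall>x. length (L x) = n" and LN: "\<forall>x. set (L x) \<subseteq> NashMP A1 A2 u1 u2"
    and Q1: "\<forall>a\<in>A1. u1 a b0 + cval A1 u1 (L (a, b0)) \<le> (\<Sum>x\<in>A1. \<sigma> x * (u1 x b0 + cval A1 u1 (L (x, b0))))"
    and Q2: "\<forall>b\<in>A2. (\<Sum>x\<in>A1. \<sigma> x * (u2 x b + cval A1 u2 (L (x, b)))) \<le> (\<Sum>x\<in>A1. \<sigma> x * (u2 x b0 + cval A1 u2 (L (x, b0))))"
  shows "SPE A1 A2 u1 u2 (Suc n) (mk1 \<sigma> L) (mk2 b0 L)"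
proof -
  have NN: "\<And>x p. p \<in> set (L x) \<Longrightarrow> fst p \<in> mixed A1 \<and> snd p \<in> A2 \<and> br1 A1 u1 (fst p) (snd p) \<and> br2 A1 A2 u2 (fst p) (snd p)"
  proof -
    fix x p assume "p \<in> set (L x)"
    then have "p \<in> NashMP A1 A2 u1 u2" using LN by blast
    then show "fst p \<in> mixed A1 \<and> snd p \<in> A2 \<and> br1 A1 u1 (fst p) (snd p) \<and> br2 A1 A2 u2 (fst p) (snd p)"
      by (cases p) (simp add: NashMP_def)
  qed
  have mx: "\<forall>x. \<forall>p\<in>set (L x). fst p \<in> mixed A1" using NN by blast
  have inL: "\<And>g. g \<noteq> [] \<Longrightarrow> length g < Suc n \<Longrightarrow> L (hd g) ! (length g - 1) \<in> set (L (hd g))"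
    using len by (metis One_nat_def Suc_pred length_greater_0_conv less_Suc_eq_le not_le nth_mem)
  have V: "\<And>u g m. g \<noteq> [] \<Longrightarrow> length g + m = Suc n \<Longrightarrow>
    rpay A1 u m (mk1 \<sigma> L) (mk2 b0 L) g = cval A1 u (drop (length g - 1) (L (hd g)))"
    using mk_val[OF len mx] by blast
  show ?thesis
  proof (rule osd_suff[OF fin])
    show "strat1 A1 A2 (Suc n) (mk1 \<sigma> L)" unfolding strat1_def
    proof (intro allI impI)
      fix h assume "hist A1 A2 h \<and> length h < Suc n"
      then have lh: "length h < Suc n" by blast
      show "mk1 \<sigma> L h \<in> mixed A1"
      proof (cases "h = []")
        case True then show ?thesis using sm by (simp add: mk1_def)
      next
        case False
        have "fst (L (hd h) ! (length h - 1)) \<in> mixed A1" using NN[OF inL[OF False lh]] by blast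
        then show ?thesis using False by (simp add: mk1_def)
      qed
    qed
    show "strat2 A1 A2 (Suc n) (mk2 b0 L)" unfolding strat2_def
    proof (intro allI impI)
      fix h assume "hist A1 A2 h \<and> length h < Suc n"
      then have lh: "length h < Suc n" by blast
      show "mk2 b0 L h \<in> A2"
      proof (cases "h = []")
        case True then show ?thesis using b0 by (simp add: mk2_def)
      next
        case False
        have "snd (L (hd h) ! (length h - 1)) \<in> A2" using NN[OF inL[OF False lh]] by blast
        then show ?thesis using False by (simp add: mk2_def)
      qed
    qed
  next
    fix g a assume hg: "hist A1 A2 g" and lg: "length g < Suc n" and aA: "a \<in> A1"
    show "u1 a (mk2 b0 L g) + rpay A1 u1 (Suc n - Suc (length g)) (mk1 \<sigma> L) (mk2 b0 L) (g @ [(a, mk2 b0 L g)])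
         \<le> rpay A1 u1 (Suc n - length g) (mk1 \<sigma> L) (mk2 b0 L) g"
    proof (cases "g = []")
      case True
      have "\<And>x. rpay A1 u1 n (mk1 \<sigma> L) (mk2 b0 L) [(x, b0)] = cval A1 u1 (L (x, b0))"
        using V[of "[(_, b0)]" n] by simp
      then show ?thesis using Q1 aA True by (simp add: mk1_def mk2_def)
    next
      case False
      define p where "p = L (hd g) ! (length g - 1)"
      have pin: "p \<in> set (L (hd g))" using inL[OF False lg] by (simp add: p_def)
      have "length (L (hd g)) = n" using len by blast
      then have lt: "length g - 1 < length (L (hd g))" using lg False by (cases g) auto
      have dr: "drop (length g - 1) (L (hd g)) = p # drop (length g) (L (hd g))"
        using Cons_nth_drop_Suc[OF lt] False by (simp add: p_def)
      have e1: "rpay A1 u1 (Suc n - Suc (length g)) (mk1 \<sigma> L) (mk2 b0 L) (g @ [(a, mk2 b0 L g)])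
          = cval A1 u1 (drop (length g) (L (hd g)))"
        using V[of "g @ [(a, mk2 b0 L g)]" "Suc n - Suc (length g)"] lg False by (simp add: hd_append)
      have e2: "rpay A1 u1 (Suc n - length g) (mk1 \<sigma> L) (mk2 b0 L) g
          = eu A1 u1 (fst p) (snd p) + cval A1 u1 (drop (length g) (L (hd g)))"
        using V[of g "Suc n - length g"] lg False dr by simp
      have "br1 A1 u1 (fst p) (snd p)" using NN[OF pin] by blast
      then have le: "u1 a (snd p) \<le> eu A1 u1 (fst p) (snd p)" by (rule br1_pure[OF _ aA fin])
      have mk2g: "mk2 b0 L g = snd p" using False by (simp add: mk2_def p_def)
      show ?thesis unfolding e1 e2 using le unfolding mk2g by linarith
    qed
  next
    fix g b assume hg: "hist A1 A2 g" and lg: "length g < Suc n" and bA: "b \<in> A2"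
    show "(\<Sum>a\<in>A1. mk1 \<sigma> L g a * (u2 a b + rpay A1 u2 (Suc n - Suc (length g)) (mk1 \<sigma> L) (mk2 b0 L) (g @ [(a, b)])))
         \<le> rpay A1 u2 (Suc n - length g) (mk1 \<sigma> L) (mk2 b0 L) g"
    proof (cases "g = []")
      case True
      have "\<And>x y. rpay A1 u2 n (mk1 \<sigma> L) (mk2 b0 L) [(x, y)] = cval A1 u2 (L (x, y))"
        using V[of "[(_, _)]" n] by simp
      then show ?thesis using Q2 bA True by (simp add: mk1_def mk2_def)
    next
      case False
      define p where "p = L (hd g) ! (length g - 1)"
      have pin: "p \<in> set (L (hd g))" using inL[OF False lg] by (simp add: p_def)
      have "length (L (hd g)) = n" using len by blast
      then have lt: "length g - 1 < length (L (hd g))" using lg False by (cases g) auto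
      have dr: "drop (length g - 1) (L (hd g)) = p # drop (length g) (L (hd g))"
        using Cons_nth_drop_Suc[OF lt] False by (simp add: p_def)
      have e1: "\<And>a. rpay A1 u2 (Suc n - Suc (length g)) (mk1 \<sigma> L) (mk2 b0 L) (g @ [(a, b)])
          = cval A1 u2 (drop (length g) (L (hd g)))"
        using V[of "g @ [(_, b)]" "Suc n - Suc (length g)"] lg False by (simp add: hd_append)
      have e2: "rpay A1 u2 (Suc n - length g) (mk1 \<sigma> L) (mk2 b0 L) g
          = eu A1 u2 (fst p) (snd p) + cval A1 u2 (drop (length g) (L (hd g)))"
        using V[of g "Suc n - length g"] lg False dr by simp
      have m1: "mk1 \<sigma> L g = fst p" using False by (simp add: mk1_def p_def)
      have "(\<Sum>a\<in>A1. mk1 \<sigma> L g a * (u2 a b + rpay A1 u2 (Suc n - Suc (length g)) (mk1 \<sigma> L) (mk2 b0 L) (g @ [(a, b)])))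
          = (\<Sum>a\<in>A1. fst p a * (u2 a b + cval A1 u2 (drop (length g) (L (hd g)))))"
        unfolding m1 e1 ..
      also have "\<dots> = eu A1 u2 (fst p) b + cval A1 u2 (drop (length g) (L (hd g)))"
        unfolding eu_def by (rule sum_mixed_const) (use NN[OF pin] in blast)
      also have "\<dots> \<le> eu A1 u2 (fst p) (snd p) + cval A1 u2 (drop (length g) (L (hd g)))"
        using NN[OF pin] bA by (simp add: br2_def)
      finally show ?thesis using e2 by simp
    qed
  qed
qed

lemma locsub_construct: "(\<sigma>, b0) \<notin> NashMP A1 A2 u1 u2 \<Longrightarrow> locally_suboptimal A1 A2 u1 u2 (Suc n) (mk1 \<sigma> L) (mk2 b0 L)"
  unfolding locally_suboptimal_def by (rule exI[of _ "[]"]) (simp add: hist_def mk1_def mk2_def)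

lemma K_exists: assumes "0 < (d::real)" shows "\<exists>K::nat. M \<le> real K * d"
proof -
  have "M / d \<le> real (nat \<lceil>M / d\<rceil>)" by linarith
  then have "M \<le> real (nat \<lceil>M / d\<rceil>) * d" using assms by (simp add: pos_divide_le_eq)
  then show ?thesis by blast
qed

lemma K_mono: "M \<le> real K * (d::real) \<Longrightarrow> 0 < d \<Longrightarrow> K \<le> K' \<Longrightarrow> M \<le> real K' * d"
  by (smt (verit, best) mult_right_mono of_nat_le_iff)

lemma cval_const: "\<forall>p\<in>set xs. eu A u (fst p) (snd p) = v \<Longrightarrow> cval A u xs = real (length xs) * v"
  by (induction xs) (simp_all add: algebra_simps)

lemma cval_nash_const: "set xs \<subseteq> S \<Longrightarrow> (\<And>p. p \<in> S \<Longrightarrow> eu A u (fst p) (snd p) = v) \<Longrightarrow> cval A u xs = real (length xs) * v"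
  by (induction xs) (simp_all add: algebra_simps)

lemma le_sum_abs: fixes f :: "'a \<Rightarrow> real" shows "finite A \<Longrightarrow> y \<in> A \<Longrightarrow> f y \<le> (\<Sum>x\<in>A. \<bar>f x\<bar>)"
proof -
  assume "finite A" "y \<in> A"
  then have "\<bar>f y\<bar> \<le> (\<Sum>x\<in>A. \<bar>f x\<bar>)" by (intro member_le_sum) auto
  then show ?thesis by linarith
qed

lemma case1:
  fixes A1 :: "'a set" and A2 :: "'b set"
  assumes fin: "finite A1" and fin2: "finite A2" and a0: "a0 \<in> A1" and b0: "b0 \<in> A2"
    and nn: "(ind a0, b0) \<notin> NashMP A1 A2 u1 u2"
    and p1: "p1 \<in> NashMP A1 A2 u1 u2" and q1: "q1 \<in> NashMP A1 A2 u1 u2"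
    and p2: "p2 \<in> NashMP A1 A2 u1 u2" and q2: "q2 \<in> NashMP A1 A2 u1 u2"
    and d1: "eu A1 u1 (fst q1) (snd q1) < eu A1 u1 (fst p1) (snd p1)"
    and d2: "eu A1 u2 (fst q2) (snd q2) < eu A1 u2 (fst p2) (snd p2)"
  shows "\<exists>T::nat. 0 < T \<and> (\<exists>s1 s2. SPE A1 A2 u1 u2 T s1 s2 \<and> locally_suboptimal A1 A2 u1 u2 T s1 s2)"
proof -
  define e1 where "e1 p = eu A1 u1 (fst p) (snd p)" for p
  define e2 where "e2 p = eu A1 u2 (fst p) (snd p)" for p
  define M1 where "M1 = (\<Sum>a\<in>A1. \<bar>u1 a b0 - u1 a0 b0\<bar>)"
  define M2 where "M2 = (\<Sum>b\<in>A2. \<bar>u2 a0 b - u2 a0 b0\<bar>)"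
  have d1': "0 < e1 p1 - e1 q1" and d2': "0 < e2 p2 - e2 q2" using d1 d2 by (simp_all add: e1_def e2_def)
  obtain K1 :: nat where K1: "M1 \<le> real K1 * (e1 p1 - e1 q1)" using K_exists[OF d1'] by blast
  obtain K2 :: nat where K2: "M2 \<le> real K2 * (e2 p2 - e2 q2)" using K_exists[OF d2'] by blast
  define K where "K = max K1 K2"
  have KK1: "M1 \<le> real K * (e1 p1 - e1 q1)" by (rule K_mono[OF K1 d1']) (simp add: K_def)
  have KK2: "M2 \<le> real K * (e2 p2 - e2 q2)" by (rule K_mono[OF K2 d2']) (simp add: K_def)
  define L where "L x = replicate K (if fst x = a0 then p1 else q1) @ replicate K (if snd x = b0 then p2 else q2)" for x :: "'a \<times> 'b"
  have len: "\<forall>x. length (L x) = K + K" by (simp add: L_def)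
  have LN: "\<forall>x. set (L x) \<subseteq> NashMP A1 A2 u1 u2" using p1 q1 p2 q2 by (auto simp: L_def)
  have C1: "cval A1 u1 (L x) = real K * e1 (if fst x = a0 then p1 else q1) + real K * e1 (if snd x = b0 then p2 else q2)" for x
    by (simp add: L_def e1_def)
  have C2: "cval A1 u2 (L x) = real K * e2 (if fst x = a0 then p1 else q1) + real K * e2 (if snd x = b0 then p2 else q2)" for x
    by (simp add: L_def e2_def)
  have sp: "SPE A1 A2 u1 u2 (Suc (K + K)) (mk1 (ind a0) L) (mk2 b0 L)"
  proof (rule construct[OF fin ind_mixed[OF fin a0] b0 len LN])
    show "\<forall>a\<in>A1. u1 a b0 + cval A1 u1 (L (a, b0)) \<le> (\<Sum>x\<in>A1. ind a0 x * (u1 x b0 + cval A1 u1 (L (x, b0))))"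
    proof
      fix a assume aA: "a \<in> A1"
      have "u1 a b0 - u1 a0 b0 \<le> M1" unfolding M1_def by (rule le_sum_abs[OF fin aA])
      then have "u1 a b0 + cval A1 u1 (L (a, b0)) \<le> u1 a0 b0 + cval A1 u1 (L (a0, b0))"
        using KK1 by (cases "a = a0") (simp_all add: C1 algebra_simps)
      then show "u1 a b0 + cval A1 u1 (L (a, b0)) \<le> (\<Sum>x\<in>A1. ind a0 x * (u1 x b0 + cval A1 u1 (L (x, b0))))"
        by (simp add: sum_ind[OF fin a0])
    qed
    show "\<forall>b\<in>A2. (\<Sum>x\<in>A1. ind a0 x * (u2 x b + cval A1 u2 (L (x, b)))) \<le> (\<Sum>x\<in>A1. ind a0 x * (u2 x b0 + cval A1 u2 (L (x, b0))))"
    proof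
      fix b assume bA: "b \<in> A2"
      have "u2 a0 b - u2 a0 b0 \<le> M2" unfolding M2_def by (rule le_sum_abs[OF fin2 bA])
      then have "u2 a0 b + cval A1 u2 (L (a0, b)) \<le> u2 a0 b0 + cval A1 u2 (L (a0, b0))"
        using KK2 by (cases "b = b0") (simp_all add: C2 algebra_simps)
      then show "(\<Sum>x\<in>A1. ind a0 x * (u2 x b + cval A1 u2 (L (x, b)))) \<le> (\<Sum>x\<in>A1. ind a0 x * (u2 x b0 + cval A1 u2 (L (x, b0))))"
        by (simp add: sum_ind[OF fin a0])
    qed
  qed
  show ?thesis using sp locsub_construct[OF nn, of "K + K" L] by blast
qed

lemma pure_nonnash:
  fixes A1 :: "'a set" and A2 :: "'b set"
  assumes fin: "finite A1" and sm: "\<sigma> \<in> mixed A1" and bA: "b \<in> A2"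
    and nn: "(\<sigma>, b) \<notin> NashMP A1 A2 u1 u2"
  shows "\<exists>a0\<in>A1. \<exists>b0\<in>A2. (ind a0, b0) \<notin> NashMP A1 A2 u1 u2"
proof (rule ccontr)
  assume "\<not> ?thesis"
  then have all: "\<And>a0 b0. a0 \<in> A1 \<Longrightarrow> b0 \<in> A2 \<Longrightarrow> (ind a0, b0) \<in> NashMP A1 A2 u1 u2" by blast
  have "br1 A1 u1 \<sigma> b"
  proof (rule br1_of_pure[OF fin sm], intro ballI)
    fix a assume aA: "a \<in> A1"
    have c: "\<forall>x\<in>A1. u1 x b = u1 a b"
    proof
      fix x assume xA: "x \<in> A1"
      have "br1 A1 u1 (ind a) b" "br1 A1 u1 (ind x) b" using all[OF aA bA] all[OF xA bA] by (auto simp: NashMP_def)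
      then have "u1 x b \<le> u1 a b" "u1 a b \<le> u1 x b"
        using br1_pure[OF _ xA fin, of u1 "ind a" b] br1_pure[OF _ aA fin, of u1 "ind x" b]
        by (simp_all add: eu_ind[OF fin aA] eu_ind[OF fin xA])
      then show "u1 x b = u1 a b" by linarith
    qed
    have "eu A1 u1 \<sigma> b = (\<Sum>x\<in>A1. \<sigma> x * u1 a b)" unfolding eu_def by (rule sum.cong) (simp_all add: c)
    also have "\<dots> = sum \<sigma> A1 * u1 a b" by (simp add: sum_distrib_right)
    finally show "u1 a b \<le> eu A1 u1 \<sigma> b" using mixedD(2)[OF sm] by simp
  qed
  moreover have "br2 A1 A2 u2 \<sigma> b" unfolding br2_def
  proof (intro conjI ballI)
    show "b \<in> A2" by (rule bA)
    fix b' assume b': "b' \<in> A2"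
    have "u2 x b' \<le> u2 x b" if xA: "x \<in> A1" for x
    proof -
      have "br2 A1 A2 u2 (ind x) b" using all[OF xA bA] by (auto simp: NashMP_def)
      then show ?thesis using b' by (simp add: br2_def eu_ind[OF fin xA])
    qed
    then show "eu A1 u2 \<sigma> b' \<le> eu A1 u2 \<sigma> b" unfolding eu_def
      by (intro sum_mono mult_left_mono) (simp_all add: mixedD(1)[OF sm])
  qed
  ultimately have "(\<sigma>, b) \<in> NashMP A1 A2 u1 u2" using sm bA by (simp add: NashMP_def)
  with nn show False by blast
qed

lemma case3:
  fixes A1 :: "'a set" and A2 :: "'b set"
  assumes fin: "finite A1" and fin2: "finite A2" and sm: "\<sigma> \<in> mixed A1" and b0: "b0 \<in> A2" and b1: "b1 \<in> A2"
    and lt: "eu A1 u2 \<sigma> b0 < eu A1 u2 \<sigma> b1" and br: "br1 A1 u1 \<sigma> b0"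
    and V1: "\<And>p. p \<in> NashMP A1 A2 u1 u2 \<Longrightarrow> eu A1 u1 (fst p) (snd p) = v"
    and p2: "p2 \<in> NashMP A1 A2 u1 u2" and q2: "q2 \<in> NashMP A1 A2 u1 u2"
    and d2: "eu A1 u2 (fst q2) (snd q2) < eu A1 u2 (fst p2) (snd p2)"
  shows "\<exists>T::nat. 0 < T \<and> (\<exists>s1 s2. SPE A1 A2 u1 u2 T s1 s2 \<and> locally_suboptimal A1 A2 u1 u2 T s1 s2)"
proof -
  define e2 where "e2 p = eu A1 u2 (fst p) (snd p)" for p
  define M2 where "M2 = (\<Sum>b\<in>A2. \<bar>eu A1 u2 \<sigma> b - eu A1 u2 \<sigma> b0\<bar>)"
  have d2': "0 < e2 p2 - e2 q2" using d2 by (simp_all add: e2_def)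
  obtain K :: nat where KK2: "M2 \<le> real K * (e2 p2 - e2 q2)" using K_exists[OF d2'] by blast
  define L where "L x = replicate K (if snd x = b0 then p2 else q2)" for x :: "'a \<times> 'b"
  have len: "\<forall>x. length (L x) = K" by (simp add: L_def)
  have LN: "\<forall>x. set (L x) \<subseteq> NashMP A1 A2 u1 u2" using p2 q2 by (auto simp: L_def)
  have C1: "cval A1 u1 (L x) = real K * v" for x
  proof -
    have "set (L x) \<subseteq> NashMP A1 A2 u1 u2" "length (L x) = K" using LN len by blast+
    then show ?thesis using cval_nash_const[of "L x" "NashMP A1 A2 u1 u2" A1 u1 v] V1 by simp
  qed
  have C2: "cval A1 u2 (L x) = real K * e2 (if snd x = b0 then p2 else q2)" for x
    by (simp add: L_def e2_def)
  have nn: "(\<sigma>, b0) \<notin> NashMP A1 A2 u1 u2"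
  proof
    assume "(\<sigma>, b0) \<in> NashMP A1 A2 u1 u2"
    then have "br2 A1 A2 u2 \<sigma> b0" by (simp add: NashMP_def)
    then have "eu A1 u2 \<sigma> b1 \<le> eu A1 u2 \<sigma> b0" using b1 by (simp add: br2_def)
    with lt show False by simp
  qed
  have sp: "SPE A1 A2 u1 u2 (Suc K) (mk1 \<sigma> L) (mk2 b0 L)"
  proof (rule construct[OF fin sm b0 len LN])
    show "\<forall>a\<in>A1. u1 a b0 + cval A1 u1 (L (a, b0)) \<le> (\<Sum>x\<in>A1. \<sigma> x * (u1 x b0 + cval A1 u1 (L (x, b0))))"
    proof
      fix a assume aA: "a \<in> A1"
      have "(\<Sum>x\<in>A1. \<sigma> x * (u1 x b0 + cval A1 u1 (L (x, b0)))) = (\<Sum>x\<in>A1. \<sigma> x * (u1 x b0 + real K * v))"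
        by (simp add: C1)
      also have "\<dots> = eu A1 u1 \<sigma> b0 + real K * v" unfolding eu_def by (rule sum_mixed_const[OF sm])
      finally show "u1 a b0 + cval A1 u1 (L (a, b0)) \<le> (\<Sum>x\<in>A1. \<sigma> x * (u1 x b0 + cval A1 u1 (L (x, b0))))"
        using br1_pure[OF br aA fin] C1 by simp
    qed
    show "\<forall>b\<in>A2. (\<Sum>x\<in>A1. \<sigma> x * (u2 x b + cval A1 u2 (L (x, b)))) \<le> (\<Sum>x\<in>A1. \<sigma> x * (u2 x b0 + cval A1 u2 (L (x, b0))))"
    proof
      fix b assume bA: "b \<in> A2"
      have S: "(\<Sum>x\<in>A1. \<sigma> x * (u2 x b' + cval A1 u2 (L (x, b')))) = eu A1 u2 \<sigma> b' + real K * e2 (if b' = b0 then p2 else q2)" for b'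
        unfolding eu_def C2 by (simp add: sum_mixed_const[OF sm])
      have "eu A1 u2 \<sigma> b - eu A1 u2 \<sigma> b0 \<le> M2" unfolding M2_def by (rule le_sum_abs[OF fin2 bA])
      then show "(\<Sum>x\<in>A1. \<sigma> x * (u2 x b + cval A1 u2 (L (x, b)))) \<le> (\<Sum>x\<in>A1. \<sigma> x * (u2 x b0 + cval A1 u2 (L (x, b0))))"
        unfolding S using KK2 by (cases "b = b0") (simp_all add: algebra_simps)
    qed
  qed
  show ?thesis using sp locsub_construct[OF nn, of K L] by blast
qed

lemma cval_concat: "cval A u (concat xss) = sum_list (map (cval A u) xss)"
  by (induction xss) simp_all

lemma set_concat_map_sub: "(\<And>c d. c \<in> set es \<Longrightarrow> d \<in> set (g c) \<Longrightarrow> f c d \<in> N) \<Longrightarrow> set (concat (map (\<lambda>c. map (f c) (g c)) es)) \<subseteq> N"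
  by auto

lemma case2:
  fixes A1 :: "'a set" and A2 :: "'b set"
  assumes fin: "finite A1" and fin2: "finite A2" and sm: "\<sigma> \<in> mixed A1" and a1: "a' \<in> A1" and b0: "b0 \<in> A2"
    and lt: "eu A1 u1 \<sigma> b0 < u1 a' b0" and br: "br2 A1 A2 u2 \<sigma> b0"
    and V2: "\<And>p. p \<in> NashMP A1 A2 u1 u2 \<Longrightarrow> eu A1 u2 (fst p) (snd p) = v"
    and p1: "p1 \<in> NashMP A1 A2 u1 u2" and q1: "q1 \<in> NashMP A1 A2 u1 u2"
    and d1: "eu A1 u1 (fst q1) (snd q1) < eu A1 u1 (fst p1) (snd p1)"
    and aS: "a \<in> support A1 \<sigma>"
    and reps: "\<forall>a''\<in>support A1 \<sigma> - {a}. \<exists>ds::real list.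
                   set ds \<subseteq> {eu A1 u1 \<sigma>' b' - eu A1 u1 \<sigma>'' b'' | \<sigma>' b' \<sigma>'' b''.
                                  (\<sigma>', b') \<in> NashMP A1 A2 u1 u2 \<and> (\<sigma>'', b'') \<in> NashMP A1 A2 u1 u2} \<and>
                   u1 a b0 - u1 a'' b0 = sum_list ds"
  shows "\<exists>T::nat. 0 < T \<and> (\<exists>s1 s2. SPE A1 A2 u1 u2 T s1 s2 \<and> locally_suboptimal A1 A2 u1 u2 T s1 s2)"
proof -
  define N where "N = NashMP A1 A2 u1 u2"
  define S where "S = support A1 \<sigma>"
  define e1 where "e1 p = eu A1 u1 (fst p) (snd p)" for p
  define Ds where "Ds = {eu A1 u1 \<sigma>' b' - eu A1 u1 \<sigma>'' b'' | \<sigma>' b' \<sigma>'' b''.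
                                  (\<sigma>', b') \<in> N \<and> (\<sigma>'', b'') \<in> N}"
  have SA: "S \<subseteq> A1" by (auto simp: S_def support_def)
  have finS: "finite S" using SA fin finite_subset by blast
  have aS': "a \<in> S" using aS by (simp add: S_def)
  have aA: "a \<in> A1" using aS' SA by blast
  have ex: "\<forall>c\<in>S - {a}. \<exists>ds. set ds \<subseteq> Ds \<and> u1 a b0 - u1 c b0 = sum_list ds"
    using reps unfolding S_def Ds_def N_def by blast
  obtain dsf where dsf: "\<forall>c\<in>S - {a}. set (dsf c) \<subseteq> Ds \<and> u1 a b0 - u1 c b0 = sum_list (dsf c)"
    using bchoice[OF ex] by blast
  define pq where "pq d = (SOME z. fst z \<in> N \<and> snd z \<in> N \<and> d = e1 (fst z) - e1 (snd z))" for d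
  have pqD: "fst (pq d) \<in> N \<and> snd (pq d) \<in> N \<and> d = e1 (fst (pq d)) - e1 (snd (pq d))" if dD: "d \<in> Ds" for d
  proof -
    obtain s' b' s'' b'' where "d = eu A1 u1 s' b' - eu A1 u1 s'' b''" "(s', b') \<in> N" "(s'', b'') \<in> N"
      using dD unfolding Ds_def by blast
    then have "\<exists>z. fst z \<in> N \<and> snd z \<in> N \<and> d = e1 (fst z) - e1 (snd z)"
      by (intro exI[of _ "((s', b'), (s'', b''))"]) (simp add: e1_def)
    then show ?thesis unfolding pq_def by (rule someI_ex)
  qed
  obtain es where es: "set es = S - {a}" "distinct es" using finite_distinct_list[of "S - {a}"] finS by blast
  define seg where "seg y = concat (map (\<lambda>c. map (\<lambda>d. if y = c then fst (pq d) else snd (pq d)) (dsf c)) es)" for y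
  define W where "W c = sum_list (map (\<lambda>d. e1 (snd (pq d))) (dsf c))" for c
  define Wt where "Wt = sum W (S - {a})"
  define M where "M = (\<Sum>y\<in>A1. \<bar>u1 y b0 - u1 a b0\<bar>)"
  have d1': "0 < e1 p1 - e1 q1" using d1 by (simp add: e1_def)
  obtain K :: nat where KK: "M \<le> real K * (e1 p1 - e1 q1)" using K_exists[OF d1'] by blast
  define L where "L x = seg (fst x) @ replicate K (if fst x \<in> S then p1 else q1)" for x :: "'a \<times> 'b"
  define n where "n = sum_list (map (\<lambda>c. length (dsf c)) es) + K"
  have len: "\<forall>x. length (L x) = n"
    by (simp add: L_def seg_def n_def length_concat o_def)
  have segN: "set (seg y) \<subseteq> N" for y
  proof -
    have H: "(if y = c then fst (pq d) else snd (pq d)) \<in> N" if "c \<in> set es" "d \<in> set (dsf c)" for c d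
    proof -
      have "d \<in> Ds" using dsf that es(1) by blast
      then show ?thesis using pqD by simp
    qed
    show ?thesis unfolding seg_def
      by (rule set_concat_map_sub[where f="\<lambda>c d. if y = c then fst (pq d) else snd (pq d)"]) (rule H)
  qed
  have LN: "\<forall>x. set (L x) \<subseteq> NashMP A1 A2 u1 u2"
    using segN p1 q1 unfolding N_def by (auto simp: L_def)
  have cmap: "cval A1 u1 (map (\<lambda>d. if t then fst (pq d) else snd (pq d)) ds)
     = sum_list (map (\<lambda>d. e1 (snd (pq d))) ds) + (if t then sum_list ds else 0)"
    if "set ds \<subseteq> Ds" for t ds
    using that
  proof (induction ds)
    case Nil then show ?case by simp
  next
    case (Cons d ds)
    have "d \<in> Ds" using Cons.prems by simp
    then have "e1 (fst (pq d)) = d + e1 (snd (pq d))" using pqD by force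
    then show ?case using Cons by (simp add: e1_def)
  qed
  have cseg: "cval A1 u1 (seg y) = Wt + (if y \<in> S - {a} then u1 a b0 - u1 y b0 else 0)" for y
  proof -
    have "cval A1 u1 (seg y) = sum_list (map (\<lambda>c. W c + (if y = c then sum_list (dsf c) else 0)) es)"
      unfolding seg_def cval_concat map_map o_def
    proof (rule arg_cong[where f=sum_list], rule map_cong[OF refl])
      fix c assume "c \<in> set es"
      then have "set (dsf c) \<subseteq> Ds" using dsf es(1) by blast
      then show "cval A1 u1 (map (\<lambda>d. if y = c then fst (pq d) else snd (pq d)) (dsf c)) = W c + (if y = c then sum_list (dsf c) else 0)"
        using cmap unfolding W_def by blast
    qed
    also have "\<dots> = (\<Sum>c\<in>S - {a}. W c + (if y = c then sum_list (dsf c) else 0))"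
      using es by (simp add: sum_list_distinct_conv_sum_set)
    also have "\<dots> = Wt + (\<Sum>c\<in>S - {a}. (if y = c then sum_list (dsf c) else 0))"
      by (simp add: sum.distrib Wt_def)
    also have "(\<Sum>c\<in>S - {a}. (if y = c then sum_list (dsf c) else 0)) = (if y \<in> S - {a} then sum_list (dsf y) else 0)"
      using finS by (simp add: sum.delta)
    also have "\<dots> = (if y \<in> S - {a} then u1 a b0 - u1 y b0 else 0)" using dsf by auto
    finally show ?thesis .
  qed
  define c where "c = u1 a b0 + Wt + real K * e1 p1"
  have val: "u1 y b0 + cval A1 u1 (L (y, b0)) = (if y \<in> S then c else u1 y b0 + Wt + real K * e1 q1)" for y
    using aS' by (auto simp: L_def cseg c_def e1_def)
  have sp: "SPE A1 A2 u1 u2 (Suc n) (mk1 \<sigma> L) (mk2 b0 L)"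
  proof (rule construct[OF fin sm b0 len LN])
    have rhs: "(\<Sum>x\<in>A1. \<sigma> x * (u1 x b0 + cval A1 u1 (L (x, b0)))) = c"
    proof -
      have "(\<Sum>x\<in>A1. \<sigma> x * (u1 x b0 + cval A1 u1 (L (x, b0)))) = (\<Sum>x\<in>A1. \<sigma> x * c)"
      proof (rule sum.cong[OF refl])
        fix x assume xA: "x \<in> A1"
        show "\<sigma> x * (u1 x b0 + cval A1 u1 (L (x, b0))) = \<sigma> x * c"
        proof (cases "x \<in> S")
          case True then show ?thesis by (simp add: val)
        next
          case False
          then have "\<sigma> x = 0" using xA mixedD(1)[OF sm xA] by (simp add: S_def support_def)
          then show ?thesis by simp
        qed
      qed
      also have "\<dots> = sum \<sigma> A1 * c" by (simp add: sum_distrib_right)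
      finally show ?thesis using mixedD(2)[OF sm] by simp
    qed
    show "\<forall>y\<in>A1. u1 y b0 + cval A1 u1 (L (y, b0)) \<le> (\<Sum>x\<in>A1. \<sigma> x * (u1 x b0 + cval A1 u1 (L (x, b0))))"
    proof
      fix y assume yA: "y \<in> A1"
      have "u1 y b0 - u1 a b0 \<le> M" unfolding M_def by (rule le_sum_abs[OF fin yA])
      show "u1 y b0 + cval A1 u1 (L (y, b0)) \<le> (\<Sum>x\<in>A1. \<sigma> x * (u1 x b0 + cval A1 u1 (L (x, b0))))"
      proof (cases "y \<in> S")
        case True then show ?thesis unfolding rhs using val[of y] by simp
      next
        case False
        have "real K * (e1 p1 - e1 q1) = real K * e1 p1 - real K * e1 q1" by (simp add: right_diff_distrib)
        then show ?thesis unfolding rhs using val[of y] False KK \<open>u1 y b0 - u1 a b0 \<le> M\<close> by (simp add: c_def)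
      qed
    qed
    have C2: "cval A1 u2 (L x) = real n * v" for x
    proof -
      have "set (L x) \<subseteq> NashMP A1 A2 u1 u2" "length (L x) = n" using LN len by blast+
      then show ?thesis using cval_nash_const[of "L x" "NashMP A1 A2 u1 u2" A1 u2 v] V2 by simp
    qed
    show "\<forall>b\<in>A2. (\<Sum>x\<in>A1. \<sigma> x * (u2 x b + cval A1 u2 (L (x, b)))) \<le> (\<Sum>x\<in>A1. \<sigma> x * (u2 x b0 + cval A1 u2 (L (x, b0))))"
    proof
      fix b assume bA: "b \<in> A2"
      have S: "(\<Sum>x\<in>A1. \<sigma> x * (u2 x b' + cval A1 u2 (L (x, b')))) = eu A1 u2 \<sigma> b' + real n * v" for b'
        unfolding eu_def C2 by (rule sum_mixed_const[OF sm])
      show "(\<Sum>x\<in>A1. \<sigma> x * (u2 x b + cval A1 u2 (L (x, b)))) \<le> (\<Sum>x\<in>A1. \<sigma> x * (u2 x b0 + cval A1 u2 (L (x, b0))))"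
        unfolding S using br bA by (simp add: br2_def)
    qed
  qed
  have nn: "(\<sigma>, b0) \<notin> NashMP A1 A2 u1 u2"
  proof
    assume "(\<sigma>, b0) \<in> NashMP A1 A2 u1 u2"
    then have "br1 A1 u1 \<sigma> b0" by (simp add: NashMP_def)
    then have "u1 a' b0 \<le> eu A1 u1 \<sigma> b0" by (rule br1_pure[OF _ a1 fin])
    with lt show False by simp
  qed
  show ?thesis using sp locsub_construct[OF nn, of n L] by blast
qed

lemma one_shot1:
  assumes sp: "SPE A1 A2 u1 u2 T s1 s2" and hg: "hist A1 A2 g" and lg: "length g < T" and aA: "a \<in> A1" and fin: "finite A1"
  shows "u1 a (s2 g) + rpay A1 u1 (T - Suc (length g)) s1 s2 (g @ [(a, s2 g)]) \<le> rpay A1 u1 (T - length g) s1 s2 g"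
proof -
  have nr: "NashRep A1 A2 u1 u2 (Suc (T - Suc (length g))) (cont s1 g) (cont s2 g)"
    using sp hg lg unfolding SPE_def by (metis Suc_diff_Suc)
  have e: "T - length g = Suc (T - Suc (length g))" using lg by simp
  have c2: "cont s2 g [] = s2 g" by (simp add: cont_def)
  show ?thesis using osd_nec1[OF nr aA fin] unfolding rpay_cont c2 e by simp
qed

lemma one_shot2:
  assumes sp: "SPE A1 A2 u1 u2 T s1 s2" and hg: "hist A1 A2 g" and lg: "length g < T" and bA: "b \<in> A2"
  shows "(\<Sum>a\<in>A1. s1 g a * (u2 a b + rpay A1 u2 (T - Suc (length g)) s1 s2 (g @ [(a, b)]))) \<le> rpay A1 u2 (T - length g) s1 s2 g"
proof -
  have nr: "NashRep A1 A2 u1 u2 (Suc (T - Suc (length g))) (cont s1 g) (cont s2 g)"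
    using sp hg lg unfolding SPE_def by (metis Suc_diff_Suc)
  have e: "T - length g = Suc (T - Suc (length g))" using lg by simp
  have c1: "cont s1 g [] = s1 g" by (simp add: cont_def)
  show ?thesis using osd_nec2[OF nr bA] unfolding rpay_cont c1 e by simp
qed

lemma sum_eq_atmost1: "length xs = length ys \<Longrightarrow> set xs \<subseteq> V \<Longrightarrow> set ys \<subseteq> V \<Longrightarrow> \<forall>x\<in>V. \<forall>y\<in>V. x = y
  \<Longrightarrow> sum_list xs = (sum_list ys :: real)"
proof (induction xs ys rule: list_induct2)
  case Nil then show ?case by simp
next
  case (Cons x xs y ys) then show ?case by simp
qed

lemma sum_map2_diff: "length xs = length ys \<Longrightarrow> sum_list (map2 (\<lambda>x y. x - y) xs ys) = sum_list xs - (sum_list ys :: real)"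
  by (induction xs ys rule: list_induct2) simp_all

lemma allnash_val1:
  assumes fin: "finite A1" and sp: "SPE A1 A2 u1 u2 T s1 s2"
    and AN: "\<And>g'. hist A1 A2 g' \<Longrightarrow> k \<le> length g' \<Longrightarrow> length g' < T \<Longrightarrow> (s1 g', s2 g') \<in> NashMP A1 A2 u1 u2"
  shows "hist A1 A2 g \<Longrightarrow> k \<le> length g \<Longrightarrow> length g + m = T \<Longrightarrow>
    \<exists>xs. length xs = m \<and> set xs \<subseteq> Vset A1 A2 u1 u2 u1 \<and> rpay A1 u1 m s1 s2 g = sum_list xs"
proof (induction m arbitrary: g)
  case 0 then show ?case by simp
next
  case (Suc m)
  define \<sigma> where "\<sigma> = s1 g"
  define b where "b = s2 g"
  have lg: "length g < T" using Suc.prems by simp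
  have NN: "(\<sigma>, b) \<in> NashMP A1 A2 u1 u2" using AN Suc.prems lg by (simp add: \<sigma>_def b_def)
  then have sm: "\<sigma> \<in> mixed A1" and bA: "b \<in> A2" and br: "br1 A1 u1 \<sigma> b" by (simp_all add: NashMP_def)
  have T1: "T - Suc (length g) = m" "T - length g = Suc m" using Suc.prems by simp_all
  define X where "X a = u1 a b + rpay A1 u1 m s1 s2 (g @ [(a, b)])" for a
  have Xle: "\<forall>a\<in>A1. X a \<le> rpay A1 u1 (Suc m) s1 s2 g"
    using one_shot1[OF sp Suc.prems(1) lg _ fin] T1 by (simp add: X_def b_def)
  have Xsum: "(\<Sum>a\<in>A1. \<sigma> a * X a) = rpay A1 u1 (Suc m) s1 s2 g"
    by (simp add: X_def \<sigma>_def b_def)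
  obtain a where aA: "a \<in> A1" and ap: "0 < \<sigma> a" using mixed_supp_ex[OF sm fin] by blast
  have Xa: "X a = rpay A1 u1 (Suc m) s1 s2 g"
    by (rule supp_eq[OF fin _ mixedD(2)[OF sm] Xle Xsum aA ap]) (simp add: mixedD(1)[OF sm])
  have ue: "u1 a b = eu A1 u1 \<sigma> b" by (rule br1_supp[OF br aA ap fin])
  obtain xs where xs: "length xs = m" "set xs \<subseteq> Vset A1 A2 u1 u2 u1"
      "rpay A1 u1 m s1 s2 (g @ [(a, b)]) = sum_list xs"
    using Suc.IH[of "g @ [(a, b)]"] hist_app[OF Suc.prems(1) aA bA] Suc.prems by auto
  have ev: "eu A1 u1 \<sigma> b \<in> Vset A1 A2 u1 u2 u1" using NN unfolding Vset_def by blast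
  show ?case
    by (rule exI[of _ "eu A1 u1 \<sigma> b # xs"]) (use xs ev Xa ue in \<open>simp add: X_def\<close>)
qed

lemma allnash_val2:
  assumes fin: "finite A1" and ne: "A1 \<noteq> {}" and sp: "SPE A1 A2 u1 u2 T s1 s2"
    and AN: "\<And>g'. hist A1 A2 g' \<Longrightarrow> k \<le> length g' \<Longrightarrow> length g' < T \<Longrightarrow> (s1 g', s2 g') \<in> NashMP A1 A2 u1 u2"
    and P2: "\<forall>x\<in>Vset A1 A2 u1 u2 u2. \<forall>y\<in>Vset A1 A2 u1 u2 u2. x = y"
  shows "hist A1 A2 g \<Longrightarrow> k \<le> length g \<Longrightarrow> length g + m = T \<Longrightarrow>
    \<exists>xs. length xs = m \<and> set xs \<subseteq> Vset A1 A2 u1 u2 u2 \<and> rpay A1 u2 m s1 s2 g = sum_list xs"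
proof (induction m arbitrary: g)
  case 0 then show ?case by simp
next
  case (Suc m)
  define \<sigma> where "\<sigma> = s1 g"
  define b where "b = s2 g"
  have lg: "length g < T" using Suc.prems by simp
  have NN: "(\<sigma>, b) \<in> NashMP A1 A2 u1 u2" using AN Suc.prems lg by (simp add: \<sigma>_def b_def)
  then have sm: "\<sigma> \<in> mixed A1" and bA: "b \<in> A2" by (simp_all add: NashMP_def)
  have IH: "\<exists>xs. length xs = m \<and> set xs \<subseteq> Vset A1 A2 u1 u2 u2 \<and> rpay A1 u2 m s1 s2 (g @ [(a, b)]) = sum_list xs"
    if aA: "a \<in> A1" for a
    using Suc.IH[of "g @ [(a, b)]"] hist_app[OF Suc.prems(1) aA bA] Suc.prems by auto
  obtain a0 where a0: "a0 \<in> A1" using ne by blast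
  obtain xs0 where xs0: "length xs0 = m" "set xs0 \<subseteq> Vset A1 A2 u1 u2 u2"
      "rpay A1 u2 m s1 s2 (g @ [(a0, b)]) = sum_list xs0" using IH[OF a0] by blast
  have eq: "rpay A1 u2 m s1 s2 (g @ [(a, b)]) = sum_list xs0" if aA: "a \<in> A1" for a
  proof -
    obtain xs where xs: "length xs = m" "set xs \<subseteq> Vset A1 A2 u1 u2 u2"
      "rpay A1 u2 m s1 s2 (g @ [(a, b)]) = sum_list xs" using IH[OF aA] by blast
    have "sum_list xs = sum_list xs0" by (rule sum_eq_atmost1[OF _ xs(2) xs0(2) P2]) (simp add: xs xs0)
    then show ?thesis using xs by simp
  qed
  have "rpay A1 u2 (Suc m) s1 s2 g = (\<Sum>a\<in>A1. \<sigma> a * (u2 a b + rpay A1 u2 m s1 s2 (g @ [(a, b)])))"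
    by (simp add: \<sigma>_def b_def)
  also have "\<dots> = (\<Sum>a\<in>A1. \<sigma> a * (u2 a b + sum_list xs0))" by (rule sum.cong) (simp_all add: eq)
  also have "\<dots> = eu A1 u2 \<sigma> b + sum_list xs0" unfolding eu_def by (rule sum_mixed_const[OF sm])
  finally have R: "rpay A1 u2 (Suc m) s1 s2 g = eu A1 u2 \<sigma> b + sum_list xs0" .
  have ev: "eu A1 u2 \<sigma> b \<in> Vset A1 A2 u1 u2 u2" using NN unfolding Vset_def by blast
  show ?case
    by (rule exI[of _ "eu A1 u2 \<sigma> b # xs0"]) (use xs0 ev R in simp)
qed

lemma only_if:
  fixes A1 :: "'a set" and A2 :: "'b set" and u1 u2 :: "'a \<Rightarrow> 'b \<Rightarrow> real"
  assumes fin: "finite A1" and ne: "A1 \<noteq> {}"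
    and sp: "SPE A1 A2 u1 u2 T s1 s2" and ls: "locally_suboptimal A1 A2 u1 u2 T s1 s2"
  shows "( ((\<exists>x\<in>Vset A1 A2 u1 u2 u1. \<exists>y\<in>Vset A1 A2 u1 u2 u1. x \<noteq> y) \<and> (\<exists>x\<in>Vset A1 A2 u1 u2 u2. \<exists>y\<in>Vset A1 A2 u1 u2 u2. x \<noteq> y) \<and>
        (\<exists>\<sigma>\<in>mixed A1. \<exists>b\<in>A2. (\<sigma>, b) \<notin> NashMP A1 A2 u1 u2))
    \<or> ((\<exists>x\<in>Vset A1 A2 u1 u2 u1. \<exists>y\<in>Vset A1 A2 u1 u2 u1. x \<noteq> y) \<and> (\<exists>v. Vset A1 A2 u1 u2 u2 = {v}) \<and>
        (\<exists>\<sigma>\<in>mixed A1. \<exists>a'\<in>A1. \<exists>b\<in>A2.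
           eu A1 u1 \<sigma> b < u1 a' b \<and> br2 A1 A2 u2 \<sigma> b \<and>
           (card (support A1 \<sigma>) > 1 \<longrightarrow>
              (\<exists>a\<in>support A1 \<sigma>. \<forall>a''\<in>support A1 \<sigma> - {a}.
                 \<exists>ds::real list.
                   set ds \<subseteq> {eu A1 u1 \<sigma>' b' - eu A1 u1 \<sigma>'' b'' | \<sigma>' b' \<sigma>'' b''.
                                  (\<sigma>', b') \<in> NashMP A1 A2 u1 u2 \<and> (\<sigma>'', b'') \<in> NashMP A1 A2 u1 u2} \<and>
                   u1 a b - u1 a'' b = sum_list ds))))
    \<or> ((\<exists>v. Vset A1 A2 u1 u2 u1 = {v}) \<and> (\<exists>x\<in>Vset A1 A2 u1 u2 u2. \<exists>y\<in>Vset A1 A2 u1 u2 u2. x \<noteq> y) \<and>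
        (\<exists>\<sigma>\<in>mixed A1. \<exists>b\<in>A2. \<exists>b'\<in>A2.
           eu A1 u2 \<sigma> b < eu A1 u2 \<sigma> b' \<and> br1 A1 u1 \<sigma> b)) )"
proof -
  define N where "N = NashMP A1 A2 u1 u2"
  define V1 where "V1 = Vset A1 A2 u1 u2 u1"
  define V2 where "V2 = Vset A1 A2 u1 u2 u2"
  define Ls where "Ls = {length g | g. hist A1 A2 g \<and> length g < T \<and> (s1 g, s2 g) \<notin> N}"
  have finLs: "finite Ls" by (rule finite_subset[of _ "{..<T}"]) (auto simp: Ls_def)
  have neLs: "Ls \<noteq> {}" using ls unfolding locally_suboptimal_def Ls_def N_def by blast
  define k where "k = Max Ls"
  have "k \<in> Ls" using finLs neLs by (simp add: k_def)
  then obtain h where hh: "hist A1 A2 h" "length h < T" "(s1 h, s2 h) \<notin> N" "length h = k"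
    by (auto simp: Ls_def)
  have AN: "(s1 g', s2 g') \<in> NashMP A1 A2 u1 u2" if "hist A1 A2 g'" "Suc k \<le> length g'" "length g' < T" for g'
  proof (rule ccontr)
    assume "(s1 g', s2 g') \<notin> NashMP A1 A2 u1 u2"
    then have "length g' \<in> Ls" using that by (auto simp: Ls_def N_def)
    then have "length g' \<le> k" using finLs by (simp add: k_def)
    with that show False by simp
  qed
  define \<sigma> where "\<sigma> = s1 h"
  define b where "b = s2 h"
  have sm: "\<sigma> \<in> mixed A1" using sp hh unfolding SPE_def strat1_def \<sigma>_def by blast
  have bA: "b \<in> A2" using sp hh unfolding SPE_def strat2_def b_def by blast
  have notN: "(\<sigma>, b) \<notin> N" using hh by (simp add: \<sigma>_def b_def)
  define m where "m = T - Suc k"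
  have Tk: "T - length h = Suc m" "T - Suc (length h) = m" using hh by (simp_all add: m_def)
  have val1: "\<exists>xs. length xs = m \<and> set xs \<subseteq> V1 \<and> rpay A1 u1 m s1 s2 (h @ [(a, b')]) = sum_list xs"
    if aA: "a \<in> A1" and bA': "b' \<in> A2" for a b'
    using allnash_val1[OF fin sp AN, where g="h @ [(a, b')]" and m=m] hist_app[OF hh(1) aA bA'] hh
    by (simp add: V1_def m_def)
  define X where "X a = u1 a b + rpay A1 u1 m s1 s2 (h @ [(a, b)])" for a
  define R1 where "R1 = rpay A1 u1 (Suc m) s1 s2 h"
  have Xle: "\<forall>a\<in>A1. X a \<le> R1"
    using one_shot1[OF sp hh(1) hh(2) _ fin] Tk by (simp add: X_def b_def R1_def)
  have Xsum: "(\<Sum>a\<in>A1. \<sigma> a * X a) = R1"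
    by (simp add: X_def \<sigma>_def b_def R1_def)
  have Xsupp: "X a = R1" if "a \<in> A1" "0 < \<sigma> a" for a
    by (rule supp_eq[OF fin _ mixedD(2)[OF sm] Xle Xsum that]) (simp add: mixedD(1)[OF sm])
  have NV1: "eu A1 u1 s' b' \<in> V1" "eu A1 u2 s' b' \<in> V2" if "(s', b') \<in> N" for s' b'
    using that by (auto simp: V1_def V2_def Vset_def N_def)
  have V1N: "\<exists>s' b'. (s', b') \<in> N \<and> x = eu A1 u1 s' b'" if "x \<in> V1" for x
    using that by (auto simp: V1_def Vset_def N_def)
  have V2N: "\<exists>s' b'. (s', b') \<in> N \<and> x = eu A1 u2 s' b'" if "x \<in> V2" for x
    using that by (auto simp: V2_def Vset_def N_def)
  have BR1: "br1 A1 u1 \<sigma> b" if P1: "\<forall>x\<in>V1. \<forall>y\<in>V1. x = y"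
  proof -
    obtain a0 where a0: "a0 \<in> A1" using ne by blast
    obtain xs0 where xs0: "length xs0 = m" "set xs0 \<subseteq> V1" "rpay A1 u1 m s1 s2 (h @ [(a0, b)]) = sum_list xs0"
      using val1[OF a0 bA] by blast
    have eq: "rpay A1 u1 m s1 s2 (h @ [(a, b)]) = sum_list xs0" if aA: "a \<in> A1" for a
    proof -
      obtain xs where xs: "length xs = m" "set xs \<subseteq> V1" "rpay A1 u1 m s1 s2 (h @ [(a, b)]) = sum_list xs"
        using val1[OF aA bA] by blast
      have "sum_list xs = sum_list xs0" by (rule sum_eq_atmost1[OF _ xs(2) xs0(2) P1]) (simp add: xs xs0)
      then show ?thesis using xs by simp
    qed
    have "R1 = (\<Sum>a\<in>A1. \<sigma> a * (u1 a b + sum_list xs0))"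
      unfolding Xsum[symmetric] by (rule sum.cong) (simp_all add: X_def eq)
    also have "\<dots> = eu A1 u1 \<sigma> b + sum_list xs0" unfolding eu_def by (rule sum_mixed_const[OF sm])
    finally have R: "R1 = eu A1 u1 \<sigma> b + sum_list xs0" .
    show ?thesis
    proof (rule br1_of_pure[OF fin sm], intro ballI)
      fix a assume aA: "a \<in> A1"
      have "X a \<le> R1" using Xle aA by blast
      then show "u1 a b \<le> eu A1 u1 \<sigma> b" using R eq[OF aA] by (simp add: X_def)
    qed
  qed
  have BR2: "br2 A1 A2 u2 \<sigma> b" if P2: "\<forall>x\<in>V2. \<forall>y\<in>V2. x = y"
  proof -
    have val2: "\<exists>xs. length xs = m \<and> set xs \<subseteq> V2 \<and> rpay A1 u2 m s1 s2 (h @ [(a, b')]) = sum_list xs"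
      if aA: "a \<in> A1" and bA': "b' \<in> A2" for a b'
      using allnash_val2[OF fin ne sp AN P2[unfolded V2_def], where g="h @ [(a, b')]" and m=m] hist_app[OF hh(1) aA bA'] hh
      by (simp add: V2_def m_def)
    obtain a0 where a0: "a0 \<in> A1" using ne by blast
    obtain xs0 where xs0: "length xs0 = m" "set xs0 \<subseteq> V2" "rpay A1 u2 m s1 s2 (h @ [(a0, b)]) = sum_list xs0"
      using val2[OF a0 bA] by blast
    have eq: "rpay A1 u2 m s1 s2 (h @ [(a, b')]) = sum_list xs0" if aA: "a \<in> A1" and bA': "b' \<in> A2" for a b'
    proof -
      obtain xs where xs: "length xs = m" "set xs \<subseteq> V2" "rpay A1 u2 m s1 s2 (h @ [(a, b')]) = sum_list xs"
        using val2[OF aA bA'] by blast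
      have "sum_list xs = sum_list xs0" by (rule sum_eq_atmost1[OF _ xs(2) xs0(2) P2]) (simp add: xs xs0)
      then show ?thesis using xs by simp
    qed
    have S: "(\<Sum>a\<in>A1. \<sigma> a * (u2 a b' + rpay A1 u2 m s1 s2 (h @ [(a, b')]))) = eu A1 u2 \<sigma> b' + sum_list xs0"
      if bA': "b' \<in> A2" for b'
    proof -
      have "(\<Sum>a\<in>A1. \<sigma> a * (u2 a b' + rpay A1 u2 m s1 s2 (h @ [(a, b')]))) = (\<Sum>a\<in>A1. \<sigma> a * (u2 a b' + sum_list xs0))"
        by (rule sum.cong) (simp_all add: eq bA')
      also have "\<dots> = eu A1 u2 \<sigma> b' + sum_list xs0" unfolding eu_def by (rule sum_mixed_const[OF sm])
      finally show ?thesis .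
    qed
    have R2: "rpay A1 u2 (Suc m) s1 s2 h = eu A1 u2 \<sigma> b + sum_list xs0"
      using S[OF bA] by (simp add: \<sigma>_def b_def)
    show ?thesis unfolding br2_def
    proof (intro conjI ballI)
      show "b \<in> A2" by (rule bA)
      fix b' assume bA': "b' \<in> A2"
      have "(\<Sum>a\<in>A1. s1 h a * (u2 a b' + rpay A1 u2 (T - Suc (length h)) s1 s2 (h @ [(a, b')]))) \<le> rpay A1 u2 (T - length h) s1 s2 h"
        by (rule one_shot2[OF sp hh(1) hh(2) bA'])
      then show "eu A1 u2 \<sigma> b' \<le> eu A1 u2 \<sigma> b" using S[OF bA'] R2 unfolding Tk by (simp add: \<sigma>_def)
    qed
  qed
  have nV1: "\<exists>v. V1 = {v}" if P1: "\<forall>x\<in>V1. \<forall>y\<in>V1. x = y" and ex: "\<exists>x. x \<in> V2" for P1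
  proof -
    obtain x where "x \<in> V2" using ex by blast
    then obtain s' b' where "(s', b') \<in> N" using V2N by blast
    then have e: "eu A1 u1 s' b' \<in> V1" using NV1 by blast
    show ?thesis using e P1 by blast
  qed
  have nV2: "\<exists>v. V2 = {v}" if P2: "\<forall>x\<in>V2. \<forall>y\<in>V2. x = y" and ex: "\<exists>x. x \<in> V1" for P2
  proof -
    obtain x where "x \<in> V1" using ex by blast
    then obtain s' b' where "(s', b') \<in> N" using V1N by blast
    then have e: "eu A1 u2 s' b' \<in> V2" using NV1 by blast
    show ?thesis using e P2 by blast
  qed
  show ?thesis
  proof (cases "\<forall>x\<in>V1. \<forall>y\<in>V1. x = y"; cases "\<forall>x\<in>V2. \<forall>y\<in>V2. x = y")
    assume P1: "\<forall>x\<in>V1. \<forall>y\<in>V1. x = y" and P2: "\<forall>x\<in>V2. \<forall>y\<in>V2. x = y"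
    have "(\<sigma>, b) \<in> N" using BR1[OF P1] BR2[OF P2] sm bA by (simp add: N_def NashMP_def)
    with notN show ?thesis by blast
  next
    assume P1: "\<forall>x\<in>V1. \<forall>y\<in>V1. x = y" and P2: "\<not> (\<forall>x\<in>V2. \<forall>y\<in>V2. x = y)"
    have "\<not> br2 A1 A2 u2 \<sigma> b" using BR1[OF P1] notN sm bA by (auto simp: N_def NashMP_def)
    then obtain b' where b': "b' \<in> A2" "eu A1 u2 \<sigma> b < eu A1 u2 \<sigma> b'" using bA unfolding br2_def by force
    have "\<exists>v. V1 = {v}" using nV1[OF P1] P2 by blast
    then show ?thesis unfolding V1_def[symmetric] V2_def[symmetric] N_def[symmetric]
    proof (intro disjI2 conjI)
      show "\<exists>x\<in>V2. \<exists>y\<in>V2. x \<noteq> y" using P2 by blast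
      show "\<exists>\<sigma>\<in>mixed A1. \<exists>b\<in>A2. \<exists>b'\<in>A2. eu A1 u2 \<sigma> b < eu A1 u2 \<sigma> b' \<and> br1 A1 u1 \<sigma> b"
        by (rule bexI[OF _ sm], rule bexI[OF _ bA], rule bexI[OF _ b'(1)]) (use b'(2) BR1[OF P1] in blast)
    qed
  next
    assume P1: "\<not> (\<forall>x\<in>V1. \<forall>y\<in>V1. x = y)" and P2: "\<forall>x\<in>V2. \<forall>y\<in>V2. x = y"
    have nb: "\<not> br1 A1 u1 \<sigma> b" using BR2[OF P2] notN sm bA by (auto simp: N_def NashMP_def)
    have "\<not> (\<forall>a\<in>A1. u1 a b \<le> eu A1 u1 \<sigma> b)" using nb br1_of_pure[OF fin sm, of u1 b] by blast
    then obtain a' where a'0: "a' \<in> A1" "\<not> u1 a' b \<le> eu A1 u1 \<sigma> b" by blast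
    then have a': "a' \<in> A1" "eu A1 u1 \<sigma> b < u1 a' b" by simp_all
    have V2s: "\<exists>v. V2 = {v}" using nV2[OF P2] P1 by blast
    have C: "\<exists>a\<in>support A1 \<sigma>. \<forall>a''\<in>support A1 \<sigma> - {a}.
                 \<exists>ds::real list.
                   set ds \<subseteq> {eu A1 u1 \<sigma>' b' - eu A1 u1 \<sigma>'' b'' | \<sigma>' b' \<sigma>'' b''. (\<sigma>', b') \<in> N \<and> (\<sigma>'', b'') \<in> N} \<and>
                   u1 a b - u1 a'' b = sum_list ds"
    proof -
      obtain a where aA: "a \<in> A1" and ap: "0 < \<sigma> a" using mixed_supp_ex[OF sm fin] by blast
      have aS: "a \<in> support A1 \<sigma>" using aA ap by (simp add: support_def)
      obtain xs where xs: "length xs = m" "set xs \<subseteq> V1" "rpay A1 u1 m s1 s2 (h @ [(a, b)]) = sum_list xs"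
        using val1[OF aA bA] by blast
      have "\<forall>a''\<in>support A1 \<sigma> - {a}. \<exists>ds::real list.
                   set ds \<subseteq> {eu A1 u1 \<sigma>' b' - eu A1 u1 \<sigma>'' b'' | \<sigma>' b' \<sigma>'' b''. (\<sigma>', b') \<in> N \<and> (\<sigma>'', b'') \<in> N} \<and>
                   u1 a b - u1 a'' b = sum_list ds"
      proof
        fix a'' assume a'': "a'' \<in> support A1 \<sigma> - {a}"
        then have a''A: "a'' \<in> A1" and a''p: "0 < \<sigma> a''" by (auto simp: support_def)
        obtain ys where ys: "length ys = m" "set ys \<subseteq> V1" "rpay A1 u1 m s1 s2 (h @ [(a'', b)]) = sum_list ys"
          using val1[OF a''A bA] by blast
        have "X a = X a''" using Xsupp[OF aA ap] Xsupp[OF a''A a''p] by simp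
        then have d: "u1 a b - u1 a'' b = sum_list ys - sum_list xs" using xs ys by (simp add: X_def)
        have sub: "set (map2 (\<lambda>x y. x - y) ys xs) \<subseteq> {eu A1 u1 \<sigma>' b' - eu A1 u1 \<sigma>'' b'' | \<sigma>' b' \<sigma>'' b''. (\<sigma>', b') \<in> N \<and> (\<sigma>'', b'') \<in> N}"
        proof
          fix z assume "z \<in> set (map2 (\<lambda>x y. x - y) ys xs)"
          then obtain x y where xy: "(x, y) \<in> set (zip ys xs)" "z = x - y" by auto
          have "x \<in> set ys" by (rule set_zip_leftD[OF xy(1)])
          then have xV: "x \<in> V1" using ys(2) by blast
          have "y \<in> set xs" by (rule set_zip_rightD[OF xy(1)])
          then have yV: "y \<in> V1" using xs(2) by blast
          obtain s' b' where "(s', b') \<in> N" "x = eu A1 u1 s' b'" using V1N[OF xV] by blast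
          moreover obtain s'' b'' where "(s'', b'') \<in> N" "y = eu A1 u1 s'' b''" using V1N[OF yV] by blast
          ultimately show "z \<in> {eu A1 u1 \<sigma>' b' - eu A1 u1 \<sigma>'' b'' | \<sigma>' b' \<sigma>'' b''. (\<sigma>', b') \<in> N \<and> (\<sigma>'', b'') \<in> N}"
            using xy by blast
        qed
        have sm2: "sum_list (map2 (\<lambda>x y. x - y) ys xs) = sum_list ys - sum_list xs"
          by (rule sum_map2_diff) (simp add: xs ys)
        show "\<exists>ds::real list.
                   set ds \<subseteq> {eu A1 u1 \<sigma>' b' - eu A1 u1 \<sigma>'' b'' | \<sigma>' b' \<sigma>'' b''. (\<sigma>', b') \<in> N \<and> (\<sigma>'', b'') \<in> N} \<and>
                   u1 a b - u1 a'' b = sum_list ds"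
          by (rule exI[of _ "map2 (\<lambda>x y. x - y) ys xs"]) (use sub d sm2 in simp)
      qed
      then show ?thesis using aS by blast
    qed
    show ?thesis unfolding V1_def[symmetric] V2_def[symmetric] N_def[symmetric]
    proof (rule disjI2, rule disjI1, intro conjI)
      show "\<exists>x\<in>V1. \<exists>y\<in>V1. x \<noteq> y" using P1 by blast
      show "\<exists>v. V2 = {v}" by (rule V2s)
      show "\<exists>\<sigma>\<in>mixed A1. \<exists>a'\<in>A1. \<exists>b\<in>A2.
           eu A1 u1 \<sigma> b < u1 a' b \<and> br2 A1 A2 u2 \<sigma> b \<and>
           (card (support A1 \<sigma>) > 1 \<longrightarrow>
              (\<exists>a\<in>support A1 \<sigma>. \<forall>a''\<in>support A1 \<sigma> - {a}.
                 \<exists>ds::real list.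
                   set ds \<subseteq> {eu A1 u1 \<sigma>' b' - eu A1 u1 \<sigma>'' b'' | \<sigma>' b' \<sigma>'' b''.
                                  (\<sigma>', b') \<in> N \<and> (\<sigma>'', b'') \<in> N} \<and>
                   u1 a b - u1 a'' b = sum_list ds))"
        by (rule bexI[OF _ sm], rule bexI[OF _ a'(1)], rule bexI[OF _ bA]) (intro conjI impI a'(2) BR2[OF P2] C)
    qed
  next
    assume P1: "\<not> (\<forall>x\<in>V1. \<forall>y\<in>V1. x = y)" and P2: "\<not> (\<forall>x\<in>V2. \<forall>y\<in>V2. x = y)"
    show ?thesis unfolding V1_def[symmetric] V2_def[symmetric] N_def[symmetric]
    proof (rule disjI1, intro conjI)
      show "\<exists>x\<in>V1. \<exists>y\<in>V1. x \<noteq> y" using P1 by blast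
      show "\<exists>x\<in>V2. \<exists>y\<in>V2. x \<noteq> y" using P2 by blast
      show "\<exists>\<sigma>\<in>mixed A1. \<exists>b\<in>A2. (\<sigma>, b) \<notin> N"
        by (rule bexI[OF _ sm], rule bexI[OF _ bA]) (rule notN)
    qed
  qed
qed

lemma two_vals:
  assumes "\<exists>x\<in>Vset A1 A2 u1 u2 u. \<exists>y\<in>Vset A1 A2 u1 u2 u. x \<noteq> y"
  shows "\<exists>p q. p \<in> NashMP A1 A2 u1 u2 \<and> q \<in> NashMP A1 A2 u1 u2 \<and> eu A1 u (fst q) (snd q) < eu A1 u (fst p) (snd p)"
proof -
  obtain x y where x: "x \<in> Vset A1 A2 u1 u2 u" and y: "y \<in> Vset A1 A2 u1 u2 u" and xy: "x \<noteq> y" using assms by blast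
  obtain s b where sb: "(s, b) \<in> NashMP A1 A2 u1 u2" "x = eu A1 u s b" using x unfolding Vset_def by blast
  obtain s' b' where sb': "(s', b') \<in> NashMP A1 A2 u1 u2" "y = eu A1 u s' b'" using y unfolding Vset_def by blast
  show ?thesis
  proof (cases "x < y")
    case True then show ?thesis using sb sb' by (intro exI[of _ "(s', b')"] exI[of _ "(s, b)"]) simp
  next
    case False then have "y < x" using xy by simp
    then show ?thesis using sb sb' by (intro exI[of _ "(s, b)"] exI[of _ "(s', b')"]) simp
  qed
qed

lemma single_val: "Vset A1 A2 u1 u2 u = {v} \<Longrightarrow> p \<in> NashMP A1 A2 u1 u2 \<Longrightarrow> eu A1 u (fst p) (snd p) = v"
proof -
  assume V: "Vset A1 A2 u1 u2 u = {v}" and p: "p \<in> NashMP A1 A2 u1 u2"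
  have "eu A1 u (fst p) (snd p) \<in> Vset A1 A2 u1 u2 u" using p unfolding Vset_def by (cases p) auto
  then show ?thesis using V by simp
qed

theorem mainTheorem6:
  fixes A1 :: "'a set" and A2 :: "'b set" and u1 u2 :: "'a \<Rightarrow> 'b \<Rightarrow> real"
  assumes "finite A1" "A1 \<noteq> {}" "finite A2" "A2 \<noteq> {}"
  defines "N \<equiv> NashMP A1 A2 u1 u2"
    and "V1 \<equiv> Vset A1 A2 u1 u2 u1"
    and "V2 \<equiv> Vset A1 A2 u1 u2 u2"
  shows "(\<exists>T::nat. 0 < T \<and> (\<exists>s1 s2. SPE A1 A2 u1 u2 T s1 s2 \<and> locally_suboptimal A1 A2 u1 u2 T s1 s2))
    \<longleftrightarrow>
    ( ((\<exists>x\<in>V1. \<exists>y\<in>V1. x \<noteq> y) \<and> (\<exists>x\<in>V2. \<exists>y\<in>V2. x \<noteq> y) \<and>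
        (\<exists>\<sigma>\<in>mixed A1. \<exists>b\<in>A2. (\<sigma>, b) \<notin> N))
    \<or> ((\<exists>x\<in>V1. \<exists>y\<in>V1. x \<noteq> y) \<and> (\<exists>v. V2 = {v}) \<and>
        (\<exists>\<sigma>\<in>mixed A1. \<exists>a'\<in>A1. \<exists>b\<in>A2.
           eu A1 u1 \<sigma> b < u1 a' b \<and> br2 A1 A2 u2 \<sigma> b \<and>
           (card (support A1 \<sigma>) > 1 \<longrightarrow>
              (\<exists>a\<in>support A1 \<sigma>. \<forall>a''\<in>support A1 \<sigma> - {a}.
                 \<exists>ds::real list.
                   set ds \<subseteq> {eu A1 u1 \<sigma>' b' - eu A1 u1 \<sigma>'' b'' | \<sigma>' b' \<sigma>'' b''.
                                  (\<sigma>', b') \<in> N \<and> (\<sigma>'', b'') \<in> N} \<and>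
                   u1 a b - u1 a'' b = sum_list ds))))
    \<or> ((\<exists>v. V1 = {v}) \<and> (\<exists>x\<in>V2. \<exists>y\<in>V2. x \<noteq> y) \<and>
        (\<exists>\<sigma>\<in>mixed A1. \<exists>b\<in>A2. \<exists>b'\<in>A2.
           eu A1 u2 \<sigma> b < eu A1 u2 \<sigma> b' \<and> br1 A1 u1 \<sigma> b)) )"
  unfolding N_def V1_def V2_def
proof
  have fin: "finite A1" and ne: "A1 \<noteq> {}" and fin2: "finite A2" using assms(1-3) .
  assume "\<exists>T::nat. 0 < T \<and> (\<exists>s1 s2. SPE A1 A2 u1 u2 T s1 s2 \<and> locally_suboptimal A1 A2 u1 u2 T s1 s2)"
  then obtain T s1 s2 where sp: "SPE A1 A2 u1 u2 T s1 s2" and ls: "locally_suboptimal A1 A2 u1 u2 T s1 s2" by blast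
  show "( ((\<exists>x\<in>Vset A1 A2 u1 u2 u1. \<exists>y\<in>Vset A1 A2 u1 u2 u1. x \<noteq> y) \<and> (\<exists>x\<in>Vset A1 A2 u1 u2 u2. \<exists>y\<in>Vset A1 A2 u1 u2 u2. x \<noteq> y) \<and>
        (\<exists>\<sigma>\<in>mixed A1. \<exists>b\<in>A2. (\<sigma>, b) \<notin> NashMP A1 A2 u1 u2))
    \<or> ((\<exists>x\<in>Vset A1 A2 u1 u2 u1. \<exists>y\<in>Vset A1 A2 u1 u2 u1. x \<noteq> y) \<and> (\<exists>v. Vset A1 A2 u1 u2 u2 = {v}) \<and>
        (\<exists>\<sigma>\<in>mixed A1. \<exists>a'\<in>A1. \<exists>b\<in>A2.
           eu A1 u1 \<sigma> b < u1 a' b \<and> br2 A1 A2 u2 \<sigma> b \<and>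
           (card (support A1 \<sigma>) > 1 \<longrightarrow>
              (\<exists>a\<in>support A1 \<sigma>. \<forall>a''\<in>support A1 \<sigma> - {a}.
                 \<exists>ds::real list.
                   set ds \<subseteq> {eu A1 u1 \<sigma>' b' - eu A1 u1 \<sigma>'' b'' | \<sigma>' b' \<sigma>'' b''.
                                  (\<sigma>', b') \<in> NashMP A1 A2 u1 u2 \<and> (\<sigma>'', b'') \<in> NashMP A1 A2 u1 u2} \<and>
                   u1 a b - u1 a'' b = sum_list ds))))
    \<or> ((\<exists>v. Vset A1 A2 u1 u2 u1 = {v}) \<and> (\<exists>x\<in>Vset A1 A2 u1 u2 u2. \<exists>y\<in>Vset A1 A2 u1 u2 u2. x \<noteq> y) \<and>
        (\<exists>\<sigma>\<in>mixed A1. \<exists>b\<in>A2. \<exists>b'\<in>A2.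
           eu A1 u2 \<sigma> b < eu A1 u2 \<sigma> b' \<and> br1 A1 u1 \<sigma> b)) )"
    by (rule only_if[OF fin ne sp ls])
next
  have fin: "finite A1" and ne: "A1 \<noteq> {}" and fin2: "finite A2" using assms(1-3) .
  assume R: "( ((\<exists>x\<in>Vset A1 A2 u1 u2 u1. \<exists>y\<in>Vset A1 A2 u1 u2 u1. x \<noteq> y) \<and> (\<exists>x\<in>Vset A1 A2 u1 u2 u2. \<exists>y\<in>Vset A1 A2 u1 u2 u2. x \<noteq> y) \<and>
        (\<exists>\<sigma>\<in>mixed A1. \<exists>b\<in>A2. (\<sigma>, b) \<notin> NashMP A1 A2 u1 u2))
    \<or> ((\<exists>x\<in>Vset A1 A2 u1 u2 u1. \<exists>y\<in>Vset A1 A2 u1 u2 u1. x \<noteq> y) \<and> (\<exists>v. Vset A1 A2 u1 u2 u2 = {v}) \<and>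
        (\<exists>\<sigma>\<in>mixed A1. \<exists>a'\<in>A1. \<exists>b\<in>A2.
           eu A1 u1 \<sigma> b < u1 a' b \<and> br2 A1 A2 u2 \<sigma> b \<and>
           (card (support A1 \<sigma>) > 1 \<longrightarrow>
              (\<exists>a\<in>support A1 \<sigma>. \<forall>a''\<in>support A1 \<sigma> - {a}.
                 \<exists>ds::real list.
                   set ds \<subseteq> {eu A1 u1 \<sigma>' b' - eu A1 u1 \<sigma>'' b'' | \<sigma>' b' \<sigma>'' b''.
                                  (\<sigma>', b') \<in> NashMP A1 A2 u1 u2 \<and> (\<sigma>'', b'') \<in> NashMP A1 A2 u1 u2} \<and>
                   u1 a b - u1 a'' b = sum_list ds))))
    \<or> ((\<exists>v. Vset A1 A2 u1 u2 u1 = {v}) \<and> (\<exists>x\<in>Vset A1 A2 u1 u2 u2. \<exists>y\<in>Vset A1 A2 u1 u2 u2. x \<noteq> y) \<and>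
        (\<exists>\<sigma>\<in>mixed A1. \<exists>b\<in>A2. \<exists>b'\<in>A2.
           eu A1 u2 \<sigma> b < eu A1 u2 \<sigma> b' \<and> br1 A1 u1 \<sigma> b)) )"
  show "\<exists>T::nat. 0 < T \<and> (\<exists>s1 s2. SPE A1 A2 u1 u2 T s1 s2 \<and> locally_suboptimal A1 A2 u1 u2 T s1 s2)"
    using R
  proof (elim disjE conjE)
    assume v1: "\<exists>x\<in>Vset A1 A2 u1 u2 u1. \<exists>y\<in>Vset A1 A2 u1 u2 u1. x \<noteq> y"
      and v2: "\<exists>x\<in>Vset A1 A2 u1 u2 u2. \<exists>y\<in>Vset A1 A2 u1 u2 u2. x \<noteq> y"
      and ex: "\<exists>\<sigma>\<in>mixed A1. \<exists>b\<in>A2. (\<sigma>, b) \<notin> NashMP A1 A2 u1 u2"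
    obtain \<sigma> b where s0: "\<sigma> \<in> mixed A1" "b \<in> A2" "(\<sigma>, b) \<notin> NashMP A1 A2 u1 u2"
      using ex by (elim bexE) (rule that; assumption)
    obtain a0 b0 where a0: "a0 \<in> A1" "b0 \<in> A2" "(ind a0, b0) \<notin> NashMP A1 A2 u1 u2"
      using pure_nonnash[OF fin s0] by (elim bexE) (rule that; assumption)
    obtain p1 q1 where pq1: "p1 \<in> NashMP A1 A2 u1 u2" "q1 \<in> NashMP A1 A2 u1 u2"
       "eu A1 u1 (fst q1) (snd q1) < eu A1 u1 (fst p1) (snd p1)" using two_vals[OF v1] by blast
    obtain p2 q2 where pq2: "p2 \<in> NashMP A1 A2 u1 u2" "q2 \<in> NashMP A1 A2 u1 u2"
       "eu A1 u2 (fst q2) (snd q2) < eu A1 u2 (fst p2) (snd p2)" using two_vals[OF v2] by blast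
    show ?thesis by (rule case1[OF fin fin2 a0 pq1(1,2) pq2(1,2) pq1(3) pq2(3)])
  next
    assume v1: "\<exists>x\<in>Vset A1 A2 u1 u2 u1. \<exists>y\<in>Vset A1 A2 u1 u2 u1. x \<noteq> y"
      and v2: "\<exists>v. Vset A1 A2 u1 u2 u2 = {v}"
      and ex: "\<exists>\<sigma>\<in>mixed A1. \<exists>a'\<in>A1. \<exists>b\<in>A2.
           eu A1 u1 \<sigma> b < u1 a' b \<and> br2 A1 A2 u2 \<sigma> b \<and>
           (card (support A1 \<sigma>) > 1 \<longrightarrow>
              (\<exists>a\<in>support A1 \<sigma>. \<forall>a''\<in>support A1 \<sigma> - {a}.
                 \<exists>ds::real list.
                   set ds \<subseteq> {eu A1 u1 \<sigma>' b' - eu A1 u1 \<sigma>'' b'' | \<sigma>' b' \<sigma>'' b''.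
                                  (\<sigma>', b') \<in> NashMP A1 A2 u1 u2 \<and> (\<sigma>'', b'') \<in> NashMP A1 A2 u1 u2} \<and>
                   u1 a b - u1 a'' b = sum_list ds))"
    obtain v where v: "Vset A1 A2 u1 u2 u2 = {v}" using v2 by blast
    obtain p1 q1 where pq1: "p1 \<in> NashMP A1 A2 u1 u2" "q1 \<in> NashMP A1 A2 u1 u2"
       "eu A1 u1 (fst q1) (snd q1) < eu A1 u1 (fst p1) (snd p1)" using two_vals[OF v1] by blast
    obtain \<sigma> a' b where sm: "\<sigma> \<in> mixed A1" and a': "a' \<in> A1" and bA: "b \<in> A2"
      and lt: "eu A1 u1 \<sigma> b < u1 a' b" and br: "br2 A1 A2 u2 \<sigma> b"
      and cc: "card (support A1 \<sigma>) > 1 \<longrightarrow>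
              (\<exists>a\<in>support A1 \<sigma>. \<forall>a''\<in>support A1 \<sigma> - {a}.
                 \<exists>ds::real list.
                   set ds \<subseteq> {eu A1 u1 \<sigma>' b' - eu A1 u1 \<sigma>'' b'' | \<sigma>' b' \<sigma>'' b''.
                                  (\<sigma>', b') \<in> NashMP A1 A2 u1 u2 \<and> (\<sigma>'', b'') \<in> NashMP A1 A2 u1 u2} \<and>
                   u1 a b - u1 a'' b = sum_list ds)"
      using ex by (elim bexE conjE) (rule that; assumption)
    have "\<exists>a\<in>support A1 \<sigma>. \<forall>a''\<in>support A1 \<sigma> - {a}.
                 \<exists>ds::real list.
                   set ds \<subseteq> {eu A1 u1 \<sigma>' b' - eu A1 u1 \<sigma>'' b'' | \<sigma>' b' \<sigma>'' b''.
                                  (\<sigma>', b') \<in> NashMP A1 A2 u1 u2 \<and> (\<sigma>'', b'') \<in> NashMP A1 A2 u1 u2} \<and>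
                   u1 a b - u1 a'' b = sum_list ds"
    proof (cases "card (support A1 \<sigma>) > 1")
      case True then show ?thesis by (rule mp[OF cc])
    next
      case False
      obtain a where aA: "a \<in> A1" and ap: "0 < \<sigma> a" using mixed_supp_ex[OF sm fin] by blast
      have aS: "a \<in> support A1 \<sigma>" using aA ap by (simp add: support_def)
      have finS: "finite (support A1 \<sigma>)" using fin by (simp add: support_def)
      have "card (support A1 \<sigma>) \<le> Suc 0" using False by simp
      then have "\<forall>x\<in>support A1 \<sigma>. \<forall>y\<in>support A1 \<sigma>. x = y" using card_le_Suc0_iff_eq[OF finS] by blast
      then have em: "support A1 \<sigma> - {a} = {}" using aS by blast
      show ?thesis by (rule bexI[OF _ aS]) (simp add: em)
    qed
    then obtain a where aS: "a \<in> support A1 \<sigma>" and reps: "\<forall>a''\<in>support A1 \<sigma> - {a}.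
                 \<exists>ds::real list.
                   set ds \<subseteq> {eu A1 u1 \<sigma>' b' - eu A1 u1 \<sigma>'' b'' | \<sigma>' b' \<sigma>'' b''.
                                  (\<sigma>', b') \<in> NashMP A1 A2 u1 u2 \<and> (\<sigma>'', b'') \<in> NashMP A1 A2 u1 u2} \<and>
                   u1 a b - u1 a'' b = sum_list ds" by (rule bexE)
    have V2: "\<And>p. p \<in> NashMP A1 A2 u1 u2 \<Longrightarrow> eu A1 u2 (fst p) (snd p) = v" by (rule single_val[OF v])
    show ?thesis by (rule case2[OF fin fin2 sm a' bA lt br V2 pq1 aS reps])
  next
    assume v1: "\<exists>v. Vset A1 A2 u1 u2 u1 = {v}"
      and v2: "\<exists>x\<in>Vset A1 A2 u1 u2 u2. \<exists>y\<in>Vset A1 A2 u1 u2 u2. x \<noteq> y"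
      and ex: "\<exists>\<sigma>\<in>mixed A1. \<exists>b\<in>A2. \<exists>b'\<in>A2. eu A1 u2 \<sigma> b < eu A1 u2 \<sigma> b' \<and> br1 A1 u1 \<sigma> b"
    obtain v where v: "Vset A1 A2 u1 u2 u1 = {v}" using v1 by blast
    obtain p2 q2 where pq2: "p2 \<in> NashMP A1 A2 u1 u2" "q2 \<in> NashMP A1 A2 u1 u2"
       "eu A1 u2 (fst q2) (snd q2) < eu A1 u2 (fst p2) (snd p2)" using two_vals[OF v2] by blast
    obtain \<sigma> b b' where sm: "\<sigma> \<in> mixed A1" and bA: "b \<in> A2" and b': "b' \<in> A2"
      and lt: "eu A1 u2 \<sigma> b < eu A1 u2 \<sigma> b'" and br: "br1 A1 u1 \<sigma> b"
      using ex by (elim bexE conjE) (rule that; assumption)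
    have V1: "\<And>p. p \<in> NashMP A1 A2 u1 u2 \<Longrightarrow> eu A1 u1 (fst p) (snd p) = v" by (rule single_val[OF v])
    show ?thesis by (rule case3[OF fin fin2 sm bA b' lt br V1 pq2])
  qed
qed

end
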